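(* Let $r:\mathcal C_1\to\mathcal C_2$ be an $F$-linear exact functor between $F$-linear triangulated categories equipped with weight structures. Assume that (1) $r$ is weight exact and (2) $r_{w=0}:\mathcal C_{1,w=0}\to\mathcal C_{2,w=0}$ is full. Then $r$ maps minimal weight filtrations to minimal weight filtrations: if $M_{\le n-1}\to M\to M_{\ge n}\xrightarrow{\delta}M_{\le n-1}[1]$ is a minimal weight filtration concentrated at $n$ of $M\in\mathcal C_1$, then $r(M_{\le n-1})\to r(M)\to r(M_{\ge n})\xrightarrow{r(\delta)} r(M_{\le n-1})[1]$ is a minimal weight filtration concentrated at $n$ of $r(M)$.
   Context: $F$ denotes a finite direct product of fields of characteristic zero. A weight structure $w$ on a triangulated category $\mathcal C$ is a pair of full subcategories $(\mathcal C_{w\le0},\mathcal C_{w\ge0})$, closed under direct summands, with $\mathcal C_{w\le0}\subset\mathcal C_{w\le0}[1]$, $\mathcal C_{w\ge0}[1]\subset\mathcal C_{w\ge0}$, $\mathcal C_{w\le n}=\mathcal C_{w\le0}[n]$, $\mathcal C_{w\ge n}=\mathcal C_{w\ge0}[n]$, $\operatorname{Hom}(\mathcal C_{w\le0},\mathcal C_{w\ge1})=0$, and every object $M$ fits, for each $n$, into an exact triangle $A\to M\to B\to A[1]$ with $A\in\mathcal C_{w\le n}$, $B\in\mathcal C_{w\ge n+1}$ (a weight filtration). Heart: $\mathcal C_{w=0}=\mathcal C_{w\le0}\cap\mathcal C_{w\ge0}$. A functor $r$ is weight exact if it maps $\mathcal C_{1,w\le0}$ into $\mathcal C_{2,w\le0}$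 and $\mathcal C_{1,w\ge0}$ into $\mathcal C_{2,w\ge0}$; $r_{w=0}$ is the induced functor on hearts. For an additive category $\mathcal A$, the radical is the ideal $\operatorname{rad}_{\mathcal A}(X,Y)=\{f:X\to Y \mid \mathrm{id}_X-gf \text{ is invertible for all } g:Y\to X\}$. A minimal weight filtration concentrated at $n$ of $M$ is an exact triangle $M_{\le n-1}\to M\to M_{\ge n}\xrightarrow{\delta}M_{\le n-1}[1]$ with $M_{\le n-1}\in\mathcal C_{w\le n-1}$, $M_{\ge n}\in\mathcal C_{w\ge n}$ and $\delta\in\operatorname{rad}_{\mathcal C}(M_{\ge n},M_{\le n-1}[1])$. *)

theory Defs
  imports Main
begin

text \<open>Internal description of a finite product of fields: a finite complete family of
nonzero pairwise orthogonal idempotents e such that each factor eF is a field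
(with unit e) of characteristic zero.\<close>

definition fin_prod_char0_fields :: "('f::comm_ring_1) itself \<Rightarrow> bool" where
  "fin_prod_char0_fields _ \<longleftrightarrow>
     (\<exists>E::'f set. finite E \<and> sum id E = 1 \<and>
        (\<forall>e\<in>E. e * e = e \<and> e \<noteq> 0) \<and>
        (\<forall>e\<in>E. \<forall>e'\<in>E. e \<noteq> e' \<longrightarrow> e * e' = 0) \<and>
        (\<forall>e\<in>E. \<forall>x. e * x \<noteq> 0 \<longrightarrow> (\<exists>y. (e * x) * y = e)) \<and>
        (\<forall>e\<in>E. \<forall>n::nat. n > 0 \<longrightarrow> of_nat n * e \<noteq> 0))"

text \<open>Morphisms live in a single type; Hom-sets of distinct pairs of objects are disjoint.
cmp g f is the composite g after f.\<close>

record ('o,'m,'f) lcat =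
  Ob   :: "'o set"
  Hom  :: "'o \<Rightarrow> 'o \<Rightarrow> 'm set"
  cmp  :: "'m \<Rightarrow> 'm \<Rightarrow> 'm"
  idt  :: "'o \<Rightarrow> 'm"
  zro  :: "'o \<Rightarrow> 'o \<Rightarrow> 'm"
  pls  :: "'m \<Rightarrow> 'm \<Rightarrow> 'm"
  smul :: "'f \<Rightarrow> 'm \<Rightarrow> 'm"

definition mdiff :: "('o,'m,'f::comm_ring_1,'x) lcat_scheme \<Rightarrow> 'm \<Rightarrow> 'm \<Rightarrow> 'm" where
  "mdiff C f g = pls C f (smul C (-1) g)"

definition biprod :: "('o,'m,'f,'x) lcat_scheme \<Rightarrow> 'o \<Rightarrow> 'o \<Rightarrow> 'o \<Rightarrow> 'm \<Rightarrow> 'm \<Rightarrow> 'm \<Rightarrow> 'm \<Rightarrow> bool" where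
  "biprod C X X' Y i p i' p' \<longleftrightarrow>
     i \<in> Hom C X Y \<and> p \<in> Hom C Y X \<and> i' \<in> Hom C X' Y \<and> p' \<in> Hom C Y X' \<and>
     cmp C p i = idt C X \<and> cmp C p' i' = idt C X' \<and>
     cmp C p i' = zro C X' X \<and> cmp C p' i = zro C X X' \<and>
     pls C (cmp C i p) (cmp C i' p') = idt C Y"

definition is_direct_summand :: "('o,'m,'f,'x) lcat_scheme \<Rightarrow> 'o \<Rightarrow> 'o \<Rightarrow> bool" where
  "is_direct_summand C X Y \<longleftrightarrow>
     X \<in> Ob C \<and> Y \<in> Ob C \<and> (\<exists>X'\<in>Ob C. \<exists>i p i' p'. biprod C X X' Y i p i' p')"

definition F_linear_cat :: "('o,'m,'f::comm_ring_1,'x) lcat_scheme \<Rightarrow> bool" where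
  "F_linear_cat C \<longleftrightarrow>
     (\<forall>X Y. (X \<notin> Ob C \<or> Y \<notin> Ob C) \<longrightarrow> Hom C X Y = {}) \<and>
     (\<forall>X Y X' Y'. Hom C X Y \<inter> Hom C X' Y' \<noteq> {} \<longrightarrow> X = X' \<and> Y = Y') \<and>
     (\<forall>X\<in>Ob C. idt C X \<in> Hom C X X) \<and>
     (\<forall>X Y Z f g. f \<in> Hom C X Y \<longrightarrow> g \<in> Hom C Y Z \<longrightarrow> cmp C g f \<in> Hom C X Z) \<and>
     (\<forall>W X Y Z f g h. f \<in> Hom C W X \<longrightarrow> g \<in> Hom C X Y \<longrightarrow> h \<in> Hom C Y Z \<longrightarrow>
        cmp C h (cmp C g f) = cmp C (cmp C h g) f) \<and>
     (\<forall>X Y f. f \<in> Hom C X Y \<longrightarrow> cmp C (idt C Y) f = f \<and> cmp C f (idt C X) = f) \<and>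
     (\<forall>X\<in>Ob C. \<forall>Y\<in>Ob C. zro C X Y \<in> Hom C X Y) \<and>
     (\<forall>X Y f g. f \<in> Hom C X Y \<longrightarrow> g \<in> Hom C X Y \<longrightarrow> pls C f g \<in> Hom C X Y) \<and>
     (\<forall>X Y a f. f \<in> Hom C X Y \<longrightarrow> smul C a f \<in> Hom C X Y) \<and>
     (\<forall>X Y f g h. f \<in> Hom C X Y \<longrightarrow> g \<in> Hom C X Y \<longrightarrow> h \<in> Hom C X Y \<longrightarrow>
        pls C (pls C f g) h = pls C f (pls C g h)) \<and>
     (\<forall>X Y f g. f \<in> Hom C X Y \<longrightarrow> g \<in> Hom C X Y \<longrightarrow> pls C f g = pls C g f) \<and>
     (\<forall>X Y f. f \<in> Hom C X Y \<longrightarrow> pls C f (zro C X Y) = f) \<and>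
     (\<forall>X Y f. f \<in> Hom C X Y \<longrightarrow> pls C f (smul C (-1) f) = zro C X Y) \<and>
     (\<forall>X Y a f g. f \<in> Hom C X Y \<longrightarrow> g \<in> Hom C X Y \<longrightarrow>
        smul C a (pls C f g) = pls C (smul C a f) (smul C a g)) \<and>
     (\<forall>X Y a b f. f \<in> Hom C X Y \<longrightarrow> smul C (a + b) f = pls C (smul C a f) (smul C b f)) \<and>
     (\<forall>X Y a b f. f \<in> Hom C X Y \<longrightarrow> smul C (a * b) f = smul C a (smul C b f)) \<and>
     (\<forall>X Y f. f \<in> Hom C X Y \<longrightarrow> smul C 1 f = f) \<and>
     (\<forall>X Y Z f f' g. f \<in> Hom C X Y \<longrightarrow> f' \<in> Hom C X Y \<longrightarrow> g \<in> Hom C Y Z \<longrightarrow>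
        cmp C g (pls C f f') = pls C (cmp C g f) (cmp C g f')) \<and>
     (\<forall>X Y Z f g g'. f \<in> Hom C X Y \<longrightarrow> g \<in> Hom C Y Z \<longrightarrow> g' \<in> Hom C Y Z \<longrightarrow>
        cmp C (pls C g g') f = pls C (cmp C g f) (cmp C g' f)) \<and>
     (\<forall>X Y Z a f g. f \<in> Hom C X Y \<longrightarrow> g \<in> Hom C Y Z \<longrightarrow>
        cmp C (smul C a g) f = smul C a (cmp C g f) \<and> cmp C g (smul C a f) = smul C a (cmp C g f)) \<and>
     (\<exists>Z0\<in>Ob C. \<forall>X\<in>Ob C. Hom C Z0 X = {zro C Z0 X} \<and> Hom C X Z0 = {zro C X Z0}) \<and>
     (\<forall>X\<in>Ob C. \<forall>X'\<in>Ob C. \<exists>Y\<in>Ob C. \<exists>i p i' p'. biprod C X X' Y i p i' p')"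

definition iso :: "('o,'m,'f,'x) lcat_scheme \<Rightarrow> 'o \<Rightarrow> 'o \<Rightarrow> 'm \<Rightarrow> bool" where
  "iso C X Y f \<longleftrightarrow> f \<in> Hom C X Y \<and>
     (\<exists>g\<in>Hom C Y X. cmp C g f = idt C X \<and> cmp C f g = idt C Y)"

definition isomorphic :: "('o,'m,'f,'x) lcat_scheme \<Rightarrow> 'o \<Rightarrow> 'o \<Rightarrow> bool" where
  "isomorphic C X Y \<longleftrightarrow> (\<exists>f. iso C X Y f)"

definition rad :: "('o,'m,'f::comm_ring_1,'x) lcat_scheme \<Rightarrow> 'o \<Rightarrow> 'o \<Rightarrow> 'm \<Rightarrow> bool" where
  "rad C X Y f \<longleftrightarrow> f \<in> Hom C X Y \<and>
     (\<forall>g\<in>Hom C Y X. iso C X X (mdiff C (idt C X) (cmp C g f)))"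

definition F_linear_functor ::
  "('o1,'m1,'f::comm_ring_1,'x) lcat_scheme \<Rightarrow> ('o2,'m2,'f,'y) lcat_scheme \<Rightarrow>
   ('o1 \<Rightarrow> 'o2) \<Rightarrow> ('m1 \<Rightarrow> 'm2) \<Rightarrow> bool" where
  "F_linear_functor C D FO FM \<longleftrightarrow>
     (\<forall>X\<in>Ob C. FO X \<in> Ob D) \<and>
     (\<forall>X Y f. f \<in> Hom C X Y \<longrightarrow> FM f \<in> Hom D (FO X) (FO Y)) \<and>
     (\<forall>X\<in>Ob C. FM (idt C X) = idt D (FO X)) \<and>
     (\<forall>X Y Z f g. f \<in> Hom C X Y \<longrightarrow> g \<in> Hom C Y Z \<longrightarrow> FM (cmp C g f) = cmp D (FM g) (FM f)) \<and>
     (\<forall>X Y f g. f \<in> Hom C X Y \<longrightarrow> g \<in> Hom C X Y \<longrightarrow> FM (pls C f g) = pls D (FM f) (FM g)) \<and>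
     (\<forall>X Y a f. f \<in> Hom C X Y \<longrightarrow> FM (smul C a f) = smul D a (FM f))"

record ('o,'m,'f) tcat = "('o,'m,'f) lcat" +
  shO :: "'o \<Rightarrow> 'o"
  shM :: "'m \<Rightarrow> 'm"
  tri :: "('o \<times> 'o \<times> 'o \<times> 'm \<times> 'm \<times> 'm) set"

definition triangle :: "('o,'m,'f,'x) tcat_scheme \<Rightarrow> 'o \<Rightarrow> 'o \<Rightarrow> 'o \<Rightarrow> 'm \<Rightarrow> 'm \<Rightarrow> 'm \<Rightarrow> bool" where
  "triangle C X Y Z f g h \<longleftrightarrow> X \<in> Ob C \<and> Y \<in> Ob C \<and> Z \<in> Ob C \<and>
     f \<in> Hom C X Y \<and> g \<in> Hom C Y Z \<and> h \<in> Hom C Z (shO C X)"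

definition triangulated :: "('o,'m,'f::comm_ring_1,'x) tcat_scheme \<Rightarrow> bool" where
  "triangulated C \<longleftrightarrow>
     F_linear_cat C \<and>
     \<comment> \<open>the shift is an F-linear autoequivalence\<close>
     F_linear_functor C C (shO C) (shM C) \<and>
     (\<forall>X\<in>Ob C. \<forall>Y\<in>Ob C. bij_betw (shM C) (Hom C X Y) (Hom C (shO C X) (shO C Y))) \<and>
     (\<forall>Y\<in>Ob C. \<exists>X\<in>Ob C. isomorphic C (shO C X) Y) \<and>
     \<comment> \<open>distinguished triangles are triangles\<close>
     (\<forall>(X,Y,Z,f,g,h)\<in>tri C. triangle C X Y Z f g h) \<and>
     \<comment> \<open>TR1\<close>
     (\<forall>X Y Z f g h X' Y' Z' f' g' h' a b c. (X,Y,Z,f,g,h) \<in> tri C \<longrightarrow>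
        triangle C X' Y' Z' f' g' h' \<longrightarrow> iso C X X' a \<longrightarrow> iso C Y Y' b \<longrightarrow> iso C Z Z' c \<longrightarrow>
        cmp C f' a = cmp C b f \<longrightarrow> cmp C g' b = cmp C c g \<longrightarrow>
        cmp C h' c = cmp C (shM C a) h \<longrightarrow> (X',Y',Z',f',g',h') \<in> tri C) \<and>
     (\<forall>X\<in>Ob C. \<exists>Z0\<in>Ob C. (\<forall>W\<in>Ob C. Hom C Z0 W = {zro C Z0 W} \<and> Hom C W Z0 = {zro C W Z0}) \<and>
        (X, X, Z0, idt C X, zro C X Z0, zro C Z0 (shO C X)) \<in> tri C) \<and>
     (\<forall>X Y f. f \<in> Hom C X Y \<longrightarrow> (\<exists>Z g h. (X,Y,Z,f,g,h) \<in> tri C)) \<and>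
     \<comment> \<open>TR2 (rotation)\<close>
     (\<forall>X Y Z f g h. triangle C X Y Z f g h \<longrightarrow>
        ((X,Y,Z,f,g,h) \<in> tri C \<longleftrightarrow> (Y, Z, shO C X, g, h, smul C (-1) (shM C f)) \<in> tri C)) \<and>
     \<comment> \<open>TR3\<close>
     (\<forall>X Y Z f g h X' Y' Z' f' g' h' a b. (X,Y,Z,f,g,h) \<in> tri C \<longrightarrow>
        (X',Y',Z',f',g',h') \<in> tri C \<longrightarrow> a \<in> Hom C X X' \<longrightarrow> b \<in> Hom C Y Y' \<longrightarrow>
        cmp C b f = cmp C f' a \<longrightarrow>
        (\<exists>c\<in>Hom C Z Z'. cmp C c g = cmp C g' b \<and> cmp C (shM C a) h = cmp C h' c)) \<and>
     \<comment> \<open>TR4 (octahedral axiom)\<close>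
     (\<forall>X Y Z f g Z' u u' X' v v' Y' w w'. f \<in> Hom C X Y \<longrightarrow> g \<in> Hom C Y Z \<longrightarrow>
        (X,Y,Z',f,u,u') \<in> tri C \<longrightarrow> (Y,Z,X',g,v,v') \<in> tri C \<longrightarrow>
        (X,Z,Y',cmp C g f,w,w') \<in> tri C \<longrightarrow>
        (\<exists>a\<in>Hom C Z' Y'. \<exists>b\<in>Hom C Y' X'.
           cmp C a u = cmp C w g \<and> cmp C w' a = u' \<and>
           cmp C b w = v \<and> cmp C v' b = cmp C (shM C f) w' \<and>
           (Z', Y', X', a, b, cmp C (shM C u) v') \<in> tri C))"

text \<open>Exact functor: an F-linear functor r together with a natural isomorphism
phi_X : r(X[1]) -> r(X)[1] such that distinguished triangles
(X,Y,Z,f,g,h) are sent to distinguished triangles (rX,rY,rZ,rf,rg,phi_X o rh).\<close>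

definition exact_functor ::
  "('o1,'m1,'f::comm_ring_1,'x) tcat_scheme \<Rightarrow> ('o2,'m2,'f,'y) tcat_scheme \<Rightarrow>
   ('o1 \<Rightarrow> 'o2) \<Rightarrow> ('m1 \<Rightarrow> 'm2) \<Rightarrow> ('o1 \<Rightarrow> 'm2) \<Rightarrow> bool" where
  "exact_functor C D FO FM phi \<longleftrightarrow>
     F_linear_functor C D FO FM \<and>
     (\<forall>X\<in>Ob C. iso D (FO (shO C X)) (shO D (FO X)) (phi X)) \<and>
     (\<forall>X Y f. f \<in> Hom C X Y \<longrightarrow>
        cmp D (phi Y) (FM (shM C f)) = cmp D (shM D (FM f)) (phi X)) \<and>
     (\<forall>X Y Z f g h. (X,Y,Z,f,g,h) \<in> tri C \<longrightarrow>
        (FO X, FO Y, FO Z, FM f, FM g, cmp D (phi X) (FM h)) \<in> tri D)"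

text \<open>For a class S of objects, shifted_class C S n is S[n] (closed under isomorphism),
for an integer n; negative shifts are handled via the autoequivalence property.\<close>
definition shifted_class :: "('o,'m,'f,'x) tcat_scheme \<Rightarrow> 'o set \<Rightarrow> int \<Rightarrow> 'o set" where
  "shifted_class C S n = {X \<in> Ob C. \<exists>Y\<in>S. \<exists>j k::nat. n = int k - int j \<and>
        isomorphic C ((shO C ^^ j) X) ((shO C ^^ k) Y)}"

text \<open>A weight structure is a pair (C_{w<=0}, C_{w>=0}).\<close>
definition wle :: "('o,'m,'f,'x) tcat_scheme \<Rightarrow> 'o set \<times> 'o set \<Rightarrow> int \<Rightarrow> 'o set" where
  "wle C w n = shifted_class C (fst w) n"

definition wge :: "('o,'m,'f,'x) tcat_scheme \<Rightarrow> 'o set \<times> 'o set \<Rightarrow> int \<Rightarrow> 'o set" where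
  "wge C w n = shifted_class C (snd w) n"

definition heart :: "'o set \<times> 'o set \<Rightarrow> 'o set" where
  "heart w = fst w \<inter> snd w"

definition weight_structure :: "('o,'m,'f,'x) tcat_scheme \<Rightarrow> 'o set \<times> 'o set \<Rightarrow> bool" where
  "weight_structure C w \<longleftrightarrow>
     fst w \<subseteq> Ob C \<and> snd w \<subseteq> Ob C \<and>
     (\<forall>X Y. is_direct_summand C X Y \<longrightarrow> Y \<in> fst w \<longrightarrow> X \<in> fst w) \<and>
     (\<forall>X Y. is_direct_summand C X Y \<longrightarrow> Y \<in> snd w \<longrightarrow> X \<in> snd w) \<and>
     fst w \<subseteq> wle C w 1 \<and>
     wge C w 1 \<subseteq> snd w \<and>
     (\<forall>X\<in>fst w. \<forall>Y\<in>wge C w 1. Hom C X Y = {zro C X Y}) \<and>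
     (\<forall>M\<in>Ob C. \<forall>n::int. \<exists>A B a b c. (A, M, B, a, b, c) \<in> tri C \<and>
        A \<in> wle C w n \<and> B \<in> wge C w (n + 1))"

definition weight_exact ::
  "('o1,'m1,'f,'x) tcat_scheme \<Rightarrow> 'o1 set \<times> 'o1 set \<Rightarrow> ('o2,'m2,'f,'y) tcat_scheme \<Rightarrow>
   'o2 set \<times> 'o2 set \<Rightarrow> ('o1 \<Rightarrow> 'o2) \<Rightarrow> bool" where
  "weight_exact C w D v FO \<longleftrightarrow>
     (\<forall>X\<in>fst w. FO X \<in> fst v) \<and> (\<forall>X\<in>snd w. FO X \<in> snd v)"

definition full_on_hearts ::
  "('o1,'m1,'f,'x) tcat_scheme \<Rightarrow> 'o1 set \<times> 'o1 set \<Rightarrow> ('o2,'m2,'f,'y) tcat_scheme \<Rightarrow>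
   ('o1 \<Rightarrow> 'o2) \<Rightarrow> ('m1 \<Rightarrow> 'm2) \<Rightarrow> bool" where
  "full_on_hearts C w D FO FM \<longleftrightarrow>
     (\<forall>X\<in>heart w. \<forall>Y\<in>heart w. Hom D (FO X) (FO Y) \<subseteq> FM ` Hom C X Y)"

definition minimal_weight_filtration ::
  "('o,'m,'f::comm_ring_1,'x) tcat_scheme \<Rightarrow> 'o set \<times> 'o set \<Rightarrow> int \<Rightarrow>
   'o \<Rightarrow> 'o \<Rightarrow> 'o \<Rightarrow> 'm \<Rightarrow> 'm \<Rightarrow> 'm \<Rightarrow> bool" where
  "minimal_weight_filtration C w n A M B a b delta \<longleftrightarrow>
     (A, M, B, a, b, delta) \<in> tri C \<and> A \<in> wle C w (n - 1) \<and> B \<in> wge C w n \<and>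
     rad C B (shO C A) delta"

end

theory Submission
  imports Defs
begin

locale lc =
  fixes C :: "('o,'m,'f::comm_ring_1,'x) lcat_scheme"
  assumes L: "F_linear_cat C"
begin

lemma hom_ob: "f \<in> Hom C X Y \<Longrightarrow> X \<in> Ob C \<and> Y \<in> Ob C"
  using L[unfolded F_linear_cat_def, THEN conjunct1] by blast
lemma hom_uniq: "f \<in> Hom C X Y \<Longrightarrow> f \<in> Hom C X' Y' \<Longrightarrow> X = X' \<and> Y = Y'"
  using L[unfolded F_linear_cat_def, THEN conjunct2, THEN conjunct1] by blast
lemma idt_hom[intro,simp]: "X \<in> Ob C \<Longrightarrow> idt C X \<in> Hom C X X"
  using L[unfolded F_linear_cat_def, THEN conjunct2, THEN conjunct2, THEN conjunct1] by blast
lemma cmp_hom[intro]: "f \<in> Hom C X Y \<Longrightarrow> g \<in> Hom C Y Z \<Longrightarrow> cmp C g f \<in> Hom C X Z"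
  using L[unfolded F_linear_cat_def, THEN conjunct2, THEN conjunct2, THEN conjunct2, THEN conjunct1] by blast
lemma assoc: "f \<in> Hom C W X \<Longrightarrow> g \<in> Hom C X Y \<Longrightarrow> h \<in> Hom C Y Z \<Longrightarrow>
   cmp C h (cmp C g f) = cmp C (cmp C h g) f"
  using L[unfolded F_linear_cat_def, THEN conjunct2, THEN conjunct2, THEN conjunct2, THEN conjunct2, THEN conjunct1] by blast
lemma idl[simp]: "f \<in> Hom C X Y \<Longrightarrow> cmp C (idt C Y) f = f"
  using L[unfolded F_linear_cat_def, THEN conjunct2, THEN conjunct2, THEN conjunct2, THEN conjunct2, THEN conjunct2, THEN conjunct1] by blast
lemma idr[simp]: "f \<in> Hom C X Y \<Longrightarrow> cmp C f (idt C X) = f"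
  using L[unfolded F_linear_cat_def, THEN conjunct2, THEN conjunct2, THEN conjunct2, THEN conjunct2, THEN conjunct2, THEN conjunct1] by blast
lemma zro_hom[intro,simp]: "X \<in> Ob C \<Longrightarrow> Y \<in> Ob C \<Longrightarrow> zro C X Y \<in> Hom C X Y"
  using L[unfolded F_linear_cat_def, THEN conjunct2, THEN conjunct2, THEN conjunct2, THEN conjunct2, THEN conjunct2, THEN conjunct2, THEN conjunct1] by blast
lemma pls_hom[intro]: "f \<in> Hom C X Y \<Longrightarrow> g \<in> Hom C X Y \<Longrightarrow> pls C f g \<in> Hom C X Y"
  using L[unfolded F_linear_cat_def, THEN conjunct2, THEN conjunct2, THEN conjunct2, THEN conjunct2, THEN conjunct2, THEN conjunct2, THEN conjunct2, THEN conjunct1] by blast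
lemma smul_hom[intro]: "f \<in> Hom C X Y \<Longrightarrow> smul C a f \<in> Hom C X Y"
  using L[unfolded F_linear_cat_def, THEN conjunct2, THEN conjunct2, THEN conjunct2, THEN conjunct2, THEN conjunct2, THEN conjunct2, THEN conjunct2, THEN conjunct2, THEN conjunct1] by blast
lemma pls_assoc: "f \<in> Hom C X Y \<Longrightarrow> g \<in> Hom C X Y \<Longrightarrow> h \<in> Hom C X Y \<Longrightarrow>
        pls C (pls C f g) h = pls C f (pls C g h)"
  using L[unfolded F_linear_cat_def, THEN conjunct2, THEN conjunct2, THEN conjunct2, THEN conjunct2, THEN conjunct2, THEN conjunct2, THEN conjunct2, THEN conjunct2, THEN conjunct2, THEN conjunct1] by blast
lemma pls_comm: "f \<in> Hom C X Y \<Longrightarrow> g \<in> Hom C X Y \<Longrightarrow> pls C f g = pls C g f"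
  using L[unfolded F_linear_cat_def, THEN conjunct2, THEN conjunct2, THEN conjunct2, THEN conjunct2, THEN conjunct2, THEN conjunct2, THEN conjunct2, THEN conjunct2, THEN conjunct2, THEN conjunct2, THEN conjunct1] by blast
lemma pls_zro[simp]: "f \<in> Hom C X Y \<Longrightarrow> pls C f (zro C X Y) = f"
  using L[unfolded F_linear_cat_def, THEN conjunct2, THEN conjunct2, THEN conjunct2, THEN conjunct2, THEN conjunct2, THEN conjunct2, THEN conjunct2, THEN conjunct2, THEN conjunct2, THEN conjunct2, THEN conjunct2, THEN conjunct1] by blast
lemma pls_neg[simp]: "f \<in> Hom C X Y \<Longrightarrow> pls C f (smul C (-1) f) = zro C X Y"
  using L[unfolded F_linear_cat_def, THEN conjunct2, THEN conjunct2, THEN conjunct2, THEN conjunct2, THEN conjunct2, THEN conjunct2, THEN conjunct2, THEN conjunct2, THEN conjunct2, THEN conjunct2, THEN conjunct2, THEN conjunct2, THEN conjunct1] by blast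
lemma smul_pls: "f \<in> Hom C X Y \<Longrightarrow> g \<in> Hom C X Y \<Longrightarrow>
        smul C a (pls C f g) = pls C (smul C a f) (smul C a g)"
  using L[unfolded F_linear_cat_def, THEN conjunct2, THEN conjunct2, THEN conjunct2, THEN conjunct2, THEN conjunct2, THEN conjunct2, THEN conjunct2, THEN conjunct2, THEN conjunct2, THEN conjunct2, THEN conjunct2, THEN conjunct2, THEN conjunct2, THEN conjunct1] by blast
lemma smul_mult: "f \<in> Hom C X Y \<Longrightarrow> smul C (a * b) f = smul C a (smul C b f)"
  using L[unfolded F_linear_cat_def, THEN conjunct2, THEN conjunct2, THEN conjunct2, THEN conjunct2, THEN conjunct2, THEN conjunct2, THEN conjunct2, THEN conjunct2, THEN conjunct2, THEN conjunct2, THEN conjunct2, THEN conjunct2, THEN conjunct2, THEN conjunct2, THEN conjunct2, THEN conjunct1] by blast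
lemma smul_one[simp]: "f \<in> Hom C X Y \<Longrightarrow> smul C 1 f = f"
  using L[unfolded F_linear_cat_def, THEN conjunct2, THEN conjunct2, THEN conjunct2, THEN conjunct2, THEN conjunct2, THEN conjunct2, THEN conjunct2, THEN conjunct2, THEN conjunct2, THEN conjunct2, THEN conjunct2, THEN conjunct2, THEN conjunct2, THEN conjunct2, THEN conjunct2, THEN conjunct2, THEN conjunct1] by blast
lemma cmp_pls_r: "f \<in> Hom C X Y \<Longrightarrow> f' \<in> Hom C X Y \<Longrightarrow> g \<in> Hom C Y Z \<Longrightarrow>
        cmp C g (pls C f f') = pls C (cmp C g f) (cmp C g f')"
  using L[unfolded F_linear_cat_def, THEN conjunct2, THEN conjunct2, THEN conjunct2, THEN conjunct2, THEN conjunct2, THEN conjunct2, THEN conjunct2, THEN conjunct2, THEN conjunct2, THEN conjunct2, THEN conjunct2, THEN conjunct2, THEN conjunct2, THEN conjunct2, THEN conjunct2, THEN conjunct2, THEN conjunct2, THEN conjunct1] by blast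
lemma cmp_pls_l: "f \<in> Hom C X Y \<Longrightarrow> g \<in> Hom C Y Z \<Longrightarrow> g' \<in> Hom C Y Z \<Longrightarrow>
        cmp C (pls C g g') f = pls C (cmp C g f) (cmp C g' f)"
  using L[unfolded F_linear_cat_def, THEN conjunct2, THEN conjunct2, THEN conjunct2, THEN conjunct2, THEN conjunct2, THEN conjunct2, THEN conjunct2, THEN conjunct2, THEN conjunct2, THEN conjunct2, THEN conjunct2, THEN conjunct2, THEN conjunct2, THEN conjunct2, THEN conjunct2, THEN conjunct2, THEN conjunct2, THEN conjunct2, THEN conjunct1] by blast
lemma cmp_smul_l: "f \<in> Hom C X Y \<Longrightarrow> g \<in> Hom C Y Z \<Longrightarrow>
        cmp C (smul C a g) f = smul C a (cmp C g f)"
  using L[unfolded F_linear_cat_def, THEN conjunct2, THEN conjunct2, THEN conjunct2, THEN conjunct2, THEN conjunct2, THEN conjunct2, THEN conjunct2, THEN conjunct2, THEN conjunct2, THEN conjunct2, THEN conjunct2, THEN conjunct2, THEN conjunct2, THEN conjunct2, THEN conjunct2, THEN conjunct2, THEN conjunct2, THEN conjunct2, THEN conjunct2, THEN conjunct1] by blast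
lemma cmp_smul_r: "f \<in> Hom C X Y \<Longrightarrow> g \<in> Hom C Y Z \<Longrightarrow>
        cmp C g (smul C a f) = smul C a (cmp C g f)"
  using L[unfolded F_linear_cat_def, THEN conjunct2, THEN conjunct2, THEN conjunct2, THEN conjunct2, THEN conjunct2, THEN conjunct2, THEN conjunct2, THEN conjunct2, THEN conjunct2, THEN conjunct2, THEN conjunct2, THEN conjunct2, THEN conjunct2, THEN conjunct2, THEN conjunct2, THEN conjunct2, THEN conjunct2, THEN conjunct2, THEN conjunct2, THEN conjunct1] by blast
lemma zero_obj: "\<exists>Z0\<in>Ob C. \<forall>X\<in>Ob C. Hom C Z0 X = {zro C Z0 X} \<and> Hom C X Z0 = {zro C X Z0}"
  using L[unfolded F_linear_cat_def, THEN conjunct2, THEN conjunct2, THEN conjunct2, THEN conjunct2, THEN conjunct2, THEN conjunct2, THEN conjunct2, THEN conjunct2, THEN conjunct2, THEN conjunct2, THEN conjunct2, THEN conjunct2, THEN conjunct2, THEN conjunct2, THEN conjunct2, THEN conjunct2, THEN conjunct2, THEN conjunct2, THEN conjunct2, THEN conjunct2, THEN conjunct1] by blast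
lemma biprod_ex: "X\<in>Ob C \<Longrightarrow> X'\<in>Ob C \<Longrightarrow> \<exists>Y\<in>Ob C. \<exists>i p i' p'. biprod C X X' Y i p i' p'"
  using L[unfolded F_linear_cat_def, THEN conjunct2, THEN conjunct2, THEN conjunct2, THEN conjunct2, THEN conjunct2, THEN conjunct2, THEN conjunct2, THEN conjunct2, THEN conjunct2, THEN conjunct2, THEN conjunct2, THEN conjunct2, THEN conjunct2, THEN conjunct2, THEN conjunct2, THEN conjunct2, THEN conjunct2, THEN conjunct2, THEN conjunct2, THEN conjunct2, THEN conjunct2] by blast

lemma zro_l[simp]: assumes "g \<in> Hom C Y Z" "X \<in> Ob C" shows "cmp C g (zro C X Y) = zro C X Z"
proof -
  have Y: "Y \<in> Ob C" using hom_ob[OF assms(1)] by auto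
  let ?z = "zro C X Y"
  have z: "?z \<in> Hom C X Y" using Y assms by auto
  have "cmp C g ?z = cmp C g (pls C ?z (smul C (-1) ?z))" by (simp only: pls_neg[OF z])
  also have "\<dots> = pls C (cmp C g ?z) (smul C (-1) (cmp C g ?z))"
    by (simp only: cmp_pls_r[OF z smul_hom[OF z] assms(1)] cmp_smul_r[OF z assms(1)])
  also have "\<dots> = zro C X Z" by (rule pls_neg) (rule cmp_hom[OF z assms(1)])
  finally show ?thesis .
qed

lemma zro_r[simp]: assumes "f \<in> Hom C X Y" "Z \<in> Ob C" shows "cmp C (zro C Y Z) f = zro C X Z"
proof -
  have Y: "Y \<in> Ob C" using hom_ob[OF assms(1)] by auto
  let ?z = "zro C Y Z"
  have z: "?z \<in> Hom C Y Z" using Y assms by auto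
  have "cmp C ?z f = cmp C (pls C ?z (smul C (-1) ?z)) f" by (simp only: pls_neg[OF z])
  also have "\<dots> = pls C (cmp C ?z f) (smul C (-1) (cmp C ?z f))"
    by (simp only: cmp_pls_l[OF assms(1) z smul_hom[OF z]] cmp_smul_l[OF assms(1) z])
  also have "\<dots> = zro C X Z" by (rule pls_neg) (rule cmp_hom[OF assms(1) z])
  finally show ?thesis .
qed

lemma pls_zro_l[simp]: assumes "f \<in> Hom C X Y" shows "pls C (zro C X Y) f = f"
proof -
  have "zro C X Y \<in> Hom C X Y" using hom_ob[OF assms] by simp
  then show ?thesis using pls_comm[OF _ assms] pls_zro[OF assms] by simp
qed

lemma neg_neg[simp]: assumes "f \<in> Hom C X Y" shows "smul C (-1) (smul C (-1) f) = f"
proof -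
  show ?thesis using smul_mult[OF assms, of "-1" "-1"] assms by simp
qed

lemma cancel_self: assumes "x \<in> Hom C X Y" "pls C x x = x" shows "x = zro C X Y"
proof -
  have "zro C X Y = pls C x (smul C (-1) x)" using assms by simp
  also have "\<dots> = pls C (pls C x x) (smul C (-1) x)" using assms by simp
  also have "\<dots> = pls C x (pls C x (smul C (-1) x))" by (rule pls_assoc[OF assms(1) assms(1) smul_hom[OF assms(1)]])
  also have "\<dots> = x" using assms by simp
  finally show ?thesis by (rule sym)
qed

lemma smul_zro[simp]: assumes "X \<in> Ob C" "Y \<in> Ob C" shows "smul C a (zro C X Y) = zro C X Y"
proof -
  have z: "zro C X Y \<in> Hom C X Y" using assms by simp
  have "pls C (smul C a (zro C X Y)) (smul C a (zro C X Y)) = smul C a (zro C X Y)"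
    using smul_pls[OF z z, of a, symmetric] pls_zro[OF z] by simp
  then show ?thesis using z cancel_self smul_hom by blast
qed

lemma mdiff_hom[intro]: "f \<in> Hom C X Y \<Longrightarrow> g \<in> Hom C X Y \<Longrightarrow> mdiff C f g \<in> Hom C X Y"
  unfolding mdiff_def by blast

lemma mdiff_self[simp]: "f \<in> Hom C X Y \<Longrightarrow> mdiff C f f = zro C X Y"
  unfolding mdiff_def by simp

lemma mdiff_zro[simp]: "f \<in> Hom C X Y \<Longrightarrow> mdiff C f (zro C X Y) = f"
  unfolding mdiff_def using hom_ob by simp

lemma mdiff_eq: assumes "f \<in> Hom C X Y" "g \<in> Hom C X Y" "mdiff C f g = zro C X Y" shows "f = g"
proof -
  have g': "smul C (-1) g \<in> Hom C X Y" using assms by blast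
  have "pls C (smul C (-1) g) g = zro C X Y" using pls_neg[OF g'] assms(2) by simp
  then have "f = pls C f (pls C (smul C (-1) g) g)"
    using assms by simp
  also have "\<dots> = pls C (mdiff C f g) g" unfolding mdiff_def using assms by (simp add: pls_assoc smul_hom)
  also have "\<dots> = g" using assms by simp
  finally show ?thesis .
qed

lemma cmp_mdiff_r: "f \<in> Hom C X Y \<Longrightarrow> f' \<in> Hom C X Y \<Longrightarrow> g \<in> Hom C Y Z \<Longrightarrow>
        cmp C g (mdiff C f f') = mdiff C (cmp C g f) (cmp C g f')"
  unfolding mdiff_def by (simp add: cmp_pls_r cmp_smul_r smul_hom)
lemma cmp_mdiff_l: "f \<in> Hom C X Y \<Longrightarrow> g \<in> Hom C Y Z \<Longrightarrow> g' \<in> Hom C Y Z \<Longrightarrow>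
        cmp C (mdiff C g g') f = mdiff C (cmp C g f) (cmp C g' f)"
  unfolding mdiff_def by (simp add: cmp_pls_l cmp_smul_l smul_hom)


declare idt_hom[simp del] zro_hom[simp del] idl[simp del] idr[simp del] pls_zro[simp del]
  pls_neg[simp del] smul_one[simp del] zro_l[simp del] zro_r[simp del] pls_zro_l[simp del]
  neg_neg[simp del] smul_zro[simp del] mdiff_self[simp del] mdiff_zro[simp del]
  idt_hom[rule del] cmp_hom[rule del] zro_hom[rule del] pls_hom[rule del] smul_hom[rule del] mdiff_hom[rule del]

definition ar where "ar f \<longleftrightarrow> (\<exists>X Y. f \<in> Hom C X Y)"
definition dm where "dm f = (THE X. \<exists>Y. f \<in> Hom C X Y)"
definition cd where "cd f = (THE Y. \<exists>X. f \<in> Hom C X Y)"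

lemma hom_iff: "f \<in> Hom C X Y \<longleftrightarrow> ar f \<and> dm f = X \<and> cd f = Y"
proof
  assume h: "f \<in> Hom C X Y"
  have "dm f = X" unfolding dm_def
    by (rule the_equality) (use h hom_uniq in blast)+
  moreover have "cd f = Y" unfolding cd_def
    by (rule the_equality) (use h hom_uniq in blast)+
  ultimately show "ar f \<and> dm f = X \<and> cd f = Y" using h ar_def by blast
next
  assume h: "ar f \<and> dm f = X \<and> cd f = Y"
  then obtain X' Y' where h': "f \<in> Hom C X' Y'" using ar_def by blast
  have "dm f = X'" unfolding dm_def
    by (rule the_equality) (use h' hom_uniq in blast)+
  moreover have "cd f = Y'" unfolding cd_def
    by (rule the_equality) (use h' hom_uniq in blast)+
  ultimately show "f \<in> Hom C X Y" using h h' by simp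
qed

lemma homD: "f \<in> Hom C X Y \<Longrightarrow> ar f \<and> dm f = X \<and> cd f = Y" using hom_iff by blast
lemma ar_hom: "ar f \<Longrightarrow> f \<in> Hom C (dm f) (cd f)" using hom_iff by blast

lemma ar_ob[simp]: "ar f \<Longrightarrow> dm f \<in> Ob C" "ar f \<Longrightarrow> cd f \<in> Ob C"
  using ar_hom hom_ob by blast+

lemma ar_idt[simp]: "X \<in> Ob C \<Longrightarrow> ar (idt C X)" "X \<in> Ob C \<Longrightarrow> dm (idt C X) = X" "X \<in> Ob C \<Longrightarrow> cd (idt C X) = X"
  using idt_hom hom_iff by blast+
lemma ar_zro[simp]: "X \<in> Ob C \<Longrightarrow> Y \<in> Ob C \<Longrightarrow> ar (zro C X Y)"
   "X \<in> Ob C \<Longrightarrow> Y \<in> Ob C \<Longrightarrow> dm (zro C X Y) = X" "X \<in> Ob C \<Longrightarrow> Y \<in> Ob C \<Longrightarrow> cd (zro C X Y) = Y"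
  using zro_hom hom_iff by blast+
lemma ar_cmp[simp]:
  "ar f \<Longrightarrow> ar g \<Longrightarrow> cd f = dm g \<Longrightarrow> ar (cmp C g f)"
  "ar f \<Longrightarrow> ar g \<Longrightarrow> cd f = dm g \<Longrightarrow> dm (cmp C g f) = dm f"
  "ar f \<Longrightarrow> ar g \<Longrightarrow> cd f = dm g \<Longrightarrow> cd (cmp C g f) = cd g"
  by (metis ar_hom cmp_hom hom_iff)+
lemma ar_pls[simp]:
  "ar f \<Longrightarrow> ar g \<Longrightarrow> dm f = dm g \<Longrightarrow> cd f = cd g \<Longrightarrow> ar (pls C f g)"
  "ar f \<Longrightarrow> ar g \<Longrightarrow> dm f = dm g \<Longrightarrow> cd f = cd g \<Longrightarrow> dm (pls C f g) = dm f"
  "ar f \<Longrightarrow> ar g \<Longrightarrow> dm f = dm g \<Longrightarrow> cd f = cd g \<Longrightarrow> cd (pls C f g) = cd f"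
  by (metis ar_hom pls_hom hom_iff)+
lemma ar_mdiff[simp]:
  "ar f \<Longrightarrow> ar g \<Longrightarrow> dm f = dm g \<Longrightarrow> cd f = cd g \<Longrightarrow> ar (mdiff C f g)"
  "ar f \<Longrightarrow> ar g \<Longrightarrow> dm f = dm g \<Longrightarrow> cd f = cd g \<Longrightarrow> dm (mdiff C f g) = dm f"
  "ar f \<Longrightarrow> ar g \<Longrightarrow> dm f = dm g \<Longrightarrow> cd f = cd g \<Longrightarrow> cd (mdiff C f g) = cd f"
  by (metis ar_hom mdiff_hom hom_iff)+
lemma ar_smul[simp]:
  "ar f \<Longrightarrow> ar (smul C a f)" "ar f \<Longrightarrow> dm (smul C a f) = dm f" "ar f \<Longrightarrow> cd (smul C a f) = cd f"
  by (metis ar_hom smul_hom hom_iff)+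

lemma assoc_s[simp]: "ar f \<Longrightarrow> ar g \<Longrightarrow> ar h \<Longrightarrow> cd f = dm g \<Longrightarrow> cd g = dm h \<Longrightarrow>
   cmp C (cmp C h g) f = cmp C h (cmp C g f)"
  by (metis ar_hom assoc)
lemma idl_s[simp]: "ar f \<Longrightarrow> cd f = Y \<Longrightarrow> cmp C (idt C Y) f = f"
  using ar_hom idl by blast
lemma idr_s[simp]: "ar f \<Longrightarrow> dm f = X \<Longrightarrow> cmp C f (idt C X) = f"
  using ar_hom idr by blast
lemma zro_l_s[simp]: "ar g \<Longrightarrow> dm g = Y \<Longrightarrow> X \<in> Ob C \<Longrightarrow> cmp C g (zro C X Y) = zro C X (cd g)"
  using ar_hom zro_l by blast
lemma zro_r_s[simp]: "ar f \<Longrightarrow> cd f = Y \<Longrightarrow> Z \<in> Ob C \<Longrightarrow> cmp C (zro C Y Z) f = zro C (dm f) Z"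
  using ar_hom zro_r by blast
lemma cmp_smul_l_s[simp]: "ar f \<Longrightarrow> ar g \<Longrightarrow> cd f = dm g \<Longrightarrow> cmp C (smul C a g) f = smul C a (cmp C g f)"
  by (metis ar_hom cmp_smul_l)
lemma cmp_smul_r_s[simp]: "ar f \<Longrightarrow> ar g \<Longrightarrow> cd f = dm g \<Longrightarrow> cmp C g (smul C a f) = smul C a (cmp C g f)"
  by (metis ar_hom cmp_smul_r)
lemma smul_zro_s[simp]: "X \<in> Ob C \<Longrightarrow> Y \<in> Ob C \<Longrightarrow> smul C a (zro C X Y) = zro C X Y"
  by (rule smul_zro)
lemma neg_neg_s[simp]: "ar f \<Longrightarrow> smul C (-1) (smul C (-1) f) = f"
  using ar_hom neg_neg by blast
lemma smul_one_s[simp]: "ar f \<Longrightarrow> smul C 1 f = f"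
  using ar_hom smul_one by blast
lemma pls_zro_s[simp]: "ar f \<Longrightarrow> dm f = X \<Longrightarrow> cd f = Y \<Longrightarrow> pls C f (zro C X Y) = f"
  using ar_hom pls_zro by blast
lemma pls_zro_l_s[simp]: "ar f \<Longrightarrow> dm f = X \<Longrightarrow> cd f = Y \<Longrightarrow> pls C (zro C X Y) f = f"
  using ar_hom pls_zro_l by blast
lemma mdiff_zro_s[simp]: "ar f \<Longrightarrow> dm f = X \<Longrightarrow> cd f = Y \<Longrightarrow> mdiff C f (zro C X Y) = f"
  using ar_hom mdiff_zro by blast
lemma mdiff_self_s[simp]: "ar f \<Longrightarrow> mdiff C f f = zro C (dm f) (cd f)"
  using ar_hom mdiff_self by blast
lemma pls_neg_s[simp]: "ar f \<Longrightarrow> pls C f (smul C (-1) f) = zro C (dm f) (cd f)"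
  using ar_hom pls_neg by blast

lemma cmp_pls_r_s: "ar f \<Longrightarrow> ar f' \<Longrightarrow> ar g \<Longrightarrow> dm f = dm f' \<Longrightarrow> cd f = cd f' \<Longrightarrow> cd f = dm g \<Longrightarrow>
        cmp C g (pls C f f') = pls C (cmp C g f) (cmp C g f')"
  by (metis ar_hom cmp_pls_r)
lemma cmp_pls_l_s: "ar f \<Longrightarrow> ar g \<Longrightarrow> ar g' \<Longrightarrow> dm g = dm g' \<Longrightarrow> cd g = cd g' \<Longrightarrow> cd f = dm g \<Longrightarrow>
        cmp C (pls C g g') f = pls C (cmp C g f) (cmp C g' f)"
  by (metis ar_hom cmp_pls_l)
lemma cmp_mdiff_r_s: "ar f \<Longrightarrow> ar f' \<Longrightarrow> ar g \<Longrightarrow> dm f = dm f' \<Longrightarrow> cd f = cd f' \<Longrightarrow> cd f = dm g \<Longrightarrow>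
        cmp C g (mdiff C f f') = mdiff C (cmp C g f) (cmp C g f')"
  by (metis ar_hom cmp_mdiff_r)
lemma cmp_mdiff_l_s: "ar f \<Longrightarrow> ar g \<Longrightarrow> ar g' \<Longrightarrow> dm g = dm g' \<Longrightarrow> cd g = cd g' \<Longrightarrow> cd f = dm g \<Longrightarrow>
        cmp C (mdiff C g g') f = mdiff C (cmp C g f) (cmp C g' f)"
  by (metis ar_hom cmp_mdiff_l)
lemma mdiff_eq_s: "ar f \<Longrightarrow> ar g \<Longrightarrow> dm f = dm g \<Longrightarrow> cd f = cd g \<Longrightarrow> mdiff C f g = zro C (dm f) (cd f) \<Longrightarrow> f = g"
  by (metis ar_hom mdiff_eq)

end


context lc begin

lemma inv2: "cmp C g f = idt C X \<Longrightarrow> ar f \<Longrightarrow> ar g \<Longrightarrow> cd f = dm g \<Longrightarrow> dm f = X \<Longrightarrow> ar x \<Longrightarrow> cd x = X \<Longrightarrow>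
   cmp C g (cmp C f x) = x"
proof -
  assume h: "cmp C g f = idt C X" "ar f" "ar g" "cd f = dm g" "dm f = X" "ar x" "cd x = X"
  have e: "cmp C (cmp C g f) x = cmp C g (cmp C f x)" by (rule assoc_s) (use h in auto)
  show ?thesis by (metis e h(1) idl_s[OF h(6) h(7)])
qed

lemma isoE: assumes "iso C X Y f"
  obtains g where "ar f" "dm f = X" "cd f = Y" "ar g" "dm g = Y" "cd g = X"
    "cmp C g f = idt C X" "cmp C f g = idt C Y"
proof -
  from assms obtain g where h: "f \<in> Hom C X Y" "g \<in> Hom C Y X" "cmp C g f = idt C X" "cmp C f g = idt C Y"
    unfolding iso_def by blast
  show ?thesis apply (rule that[of g]) using h by (auto simp: hom_iff)
qed

lemma isoI: "ar f \<Longrightarrow> dm f = X \<Longrightarrow> cd f = Y \<Longrightarrow> ar g \<Longrightarrow> dm g = Y \<Longrightarrow> cd g = X \<Longrightarrow>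
    cmp C g f = idt C X \<Longrightarrow> cmp C f g = idt C Y \<Longrightarrow> iso C X Y f"
  unfolding iso_def by (intro conjI bexI[of _ g]) (auto simp: hom_iff)

lemma iso_id: "X \<in> Ob C \<Longrightarrow> iso C X X (idt C X)"
  by (rule isoI[where g="idt C X"]) auto

lemma iso_inv: assumes "iso C X Y f"
  obtains g where "iso C Y X g" "cmp C g f = idt C X" "cmp C f g = idt C Y"
proof -
  obtain g where h: "ar f" "dm f = X" "cd f = Y" "ar g" "dm g = Y" "cd g = X"
    "cmp C g f = idt C X" "cmp C f g = idt C Y" using isoE[OF assms] by blast
  have "iso C Y X g" using h by (intro isoI[where g=f]) auto
  then show ?thesis using that h by blast
qed

lemma iso_cmp: assumes "iso C X Y f" "iso C Y Z g" shows "iso C X Z (cmp C g f)"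
proof -
  obtain f' where f: "ar f" "dm f = X" "cd f = Y" "ar f'" "dm f' = Y" "cd f' = X"
    "cmp C f' f = idt C X" "cmp C f f' = idt C Y" using isoE[OF assms(1)] by blast
  obtain g' where g: "ar g" "dm g = Y" "cd g = Z" "ar g'" "dm g' = Z" "cd g' = Y"
    "cmp C g' g = idt C Y" "cmp C g g' = idt C Z" using isoE[OF assms(2)] by blast
  show ?thesis
  proof (rule isoI[where g="cmp C f' g'"])
    have "cmp C (cmp C f' g') (cmp C g f) = cmp C f' (cmp C g' (cmp C g f))" using f g by simp
    also have "\<dots> = cmp C f' f" using f g by (simp add: inv2[OF g(7)])
    finally show "cmp C (cmp C f' g') (cmp C g f) = idt C X" using f by simp
    have "cmp C (cmp C g f) (cmp C f' g') = cmp C g (cmp C f (cmp C f' g'))" using f g by simp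
    also have "\<dots> = cmp C g g'" using f g by (simp add: inv2[OF f(8)])
    finally show "cmp C (cmp C g f) (cmp C f' g') = idt C Z" using g by simp
  qed (use f g in auto)
qed

lemma isomorphic_refl: "X \<in> Ob C \<Longrightarrow> isomorphic C X X"
  unfolding isomorphic_def using iso_id by blast
lemma isomorphic_sym: "isomorphic C X Y \<Longrightarrow> isomorphic C Y X"
  unfolding isomorphic_def using iso_inv by blast
lemma isomorphic_trans: "isomorphic C X Y \<Longrightarrow> isomorphic C Y Z \<Longrightarrow> isomorphic C X Z"
  unfolding isomorphic_def using iso_cmp by blast
lemma isomorphic_ob: "isomorphic C X Y \<Longrightarrow> X \<in> Ob C \<and> Y \<in> Ob C"
  unfolding isomorphic_def using isoE ar_ob by metis

definition zobj where "zobj Z \<longleftrightarrow> Z \<in> Ob C \<and> (\<forall>X\<in>Ob C. Hom C Z X = {zro C Z X} \<and> Hom C X Z = {zro C X Z})"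

lemma zobj_ex: "\<exists>Z. zobj Z" using zero_obj zobj_def by blast
lemma zobj_ob: "zobj Z \<Longrightarrow> Z \<in> Ob C" using zobj_def by blast
lemma zobj_from: "zobj Z \<Longrightarrow> ar f \<Longrightarrow> dm f = Z \<Longrightarrow> f = zro C Z (cd f)"
  using ar_hom[of f] ar_ob(2)[of f] unfolding zobj_def by force
lemma zobj_to: "zobj Z \<Longrightarrow> ar f \<Longrightarrow> cd f = Z \<Longrightarrow> f = zro C (dm f) Z"
  using ar_hom[of f] ar_ob(1)[of f] unfolding zobj_def by force
lemma zobj_id: "zobj Z \<Longrightarrow> idt C Z = zro C Z Z"
  using zobj_from[of Z "idt C Z"] zobj_ob[of Z] by simp
lemma zobj_iso: assumes "zobj Z" "zobj Z'" shows "iso C Z Z' (zro C Z Z')"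
proof -
  have o: "Z \<in> Ob C" "Z' \<in> Ob C" using assms zobj_ob by auto
  show ?thesis
    by (rule isoI[where g="zro C Z' Z"]) (use o assms zobj_id in auto)
qed

lemma biprod_ob: "biprod C X X' Y i p i' p' \<Longrightarrow> X \<in> Ob C \<and> X' \<in> Ob C \<and> Y \<in> Ob C"
  unfolding biprod_def using hom_ob by blast

lemma iso_summand: assumes "iso C P Q a" shows "is_direct_summand C P Q"
proof -
  obtain b where h: "ar a" "dm a = P" "cd a = Q" "ar b" "dm b = Q" "cd b = P"
    "cmp C b a = idt C P" "cmp C a b = idt C Q" using isoE[OF assms] by blast
  obtain Z where z: "zobj Z" using zobj_ex by blast
  have o: "P \<in> Ob C" "Q \<in> Ob C" "Z \<in> Ob C" using h z zobj_ob by auto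
  have "biprod C P Z Q a b (zro C Z Q) (zro C Q Z)"
    unfolding biprod_def hom_iff using h o zobj_id[OF z] by auto
  then show ?thesis unfolding is_direct_summand_def using o by blast
qed

lemma summand_transport:
  assumes "is_direct_summand C X Y" "isomorphic C X0 X" "isomorphic C Y Y2"
  shows "is_direct_summand C X0 Y2"
proof -
  obtain X' i p i' p' where X': "X' \<in> Ob C" and b: "biprod C X X' Y i p i' p'"
    using assms(1) unfolding is_direct_summand_def by blast
  obtain a where "iso C X0 X a" using assms(2) unfolding isomorphic_def by blast
  then obtain a' where a: "ar a" "dm a = X0" "cd a = X" "ar a'" "dm a' = X" "cd a' = X0"
    "cmp C a' a = idt C X0" "cmp C a a' = idt C X" using isoE by blast
  obtain c where "iso C Y Y2 c" using assms(3) unfolding isomorphic_def by blast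
  then obtain c' where c: "ar c" "dm c = Y" "cd c = Y2" "ar c'" "dm c' = Y2" "cd c' = Y"
    "cmp C c' c = idt C Y" "cmp C c c' = idt C Y2" using isoE by blast
  have bb: "ar i" "dm i = X" "cd i = Y" "ar p" "dm p = Y" "cd p = X"
     "ar i'" "dm i' = X'" "cd i' = Y" "ar p'" "dm p' = Y" "cd p' = X'"
     "cmp C p i = idt C X" "cmp C p' i' = idt C X'" "cmp C p i' = zro C X' X" "cmp C p' i = zro C X X'"
     "pls C (cmp C i p) (cmp C i' p') = idt C Y"
    by (insert b[unfolded biprod_def hom_iff], elim conjE, assumption)+
  have o: "X \<in> Ob C" "Y \<in> Ob C" "X0 \<in> Ob C" "Y2 \<in> Ob C" using a c ar_ob by auto
  let ?i = "cmp C c (cmp C i a)" and ?p = "cmp C a' (cmp C p c')"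
  let ?i' = "cmp C c i'" and ?p' = "cmp C p' c'"
  have e1: "cmp C ?p ?i = idt C X0"
    using a bb c by (simp add: inv2[OF c(7)] inv2[OF bb(13)])
  have e2: "cmp C ?p' ?i' = idt C X'"
    using a bb c by (simp add: inv2[OF c(7)] inv2[OF bb(14)])
  have e3: "cmp C ?p ?i' = zro C X' X0"
  proof -
    have "cmp C ?p ?i' = cmp C a' (cmp C p (cmp C c' (cmp C c i')))" using a bb c by simp
    also have "\<dots> = cmp C a' (cmp C p i')" using a bb c by (simp add: inv2[OF c(7)])
    also have "\<dots> = zro C X' X0" using a bb c X' by simp
    finally show ?thesis .
  qed
  have e4: "cmp C ?p' ?i = zro C X0 X'"
  proof -
    have "cmp C ?p' ?i = cmp C p' (cmp C c' (cmp C c (cmp C i a)))" using a bb c by simp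
    also have "\<dots> = cmp C p' (cmp C i a)" using a bb c by (simp add: inv2[OF c(7)])
    also have "\<dots> = cmp C (cmp C p' i) a" by (rule assoc_s[symmetric]) (use a bb in simp_all)
    also have "\<dots> = zro C X0 X'" using a bb c X' by simp
    finally show ?thesis .
  qed
  have s1: "cmp C ?i ?p = cmp C c (cmp C (cmp C i p) c')"
    using a bb c by (simp add: inv2[OF a(8)])
  have s2: "cmp C ?i' ?p' = cmp C c (cmp C (cmp C i' p') c')"
    using a bb c by simp
  have s3: "pls C (cmp C c (cmp C (cmp C i p) c')) (cmp C c (cmp C (cmp C i' p') c'))
     = cmp C c (pls C (cmp C (cmp C i p) c') (cmp C (cmp C i' p') c'))"
    by (rule cmp_pls_r_s[symmetric]) (use a bb c in simp_all)
  have s4: "pls C (cmp C (cmp C i p) c') (cmp C (cmp C i' p') c') = cmp C (pls C (cmp C i p) (cmp C i' p')) c'"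
    by (rule cmp_pls_l_s[symmetric]) (use a bb c in simp_all)
  have e5: "pls C (cmp C ?i ?p) (cmp C ?i' ?p') = idt C Y2"
    unfolding s1 s2 s3 s4 bb(17) using c by simp
  have "biprod C X0 X' Y2 ?i ?p ?i' ?p'"
    unfolding biprod_def hom_iff using a bb c e1 e2 e3 e4 e5 by simp
  then show ?thesis unfolding is_direct_summand_def using o X' by blast
qed

lemma closed_iso: "(\<forall>X Y. is_direct_summand C X Y \<longrightarrow> Y \<in> S \<longrightarrow> X \<in> S) \<Longrightarrow> isomorphic C P Q \<Longrightarrow> Q \<in> S \<Longrightarrow> P \<in> S"
proof -
  assume h: "\<forall>X Y. is_direct_summand C X Y \<longrightarrow> Y \<in> S \<longrightarrow> X \<in> S" "isomorphic C P Q" "Q \<in> S"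
  obtain a where "iso C P Q a" using h(2) unfolding isomorphic_def by blast
  then have "is_direct_summand C P Q" by (rule iso_summand)
  then show "P \<in> S" using h by blast
qed

end


locale lfun = C: lc C + D: lc D
  for C :: "('o1,'m1,'f::comm_ring_1,'x) lcat_scheme" and D :: "('o2,'m2,'f,'y) lcat_scheme" +
  fixes FO :: "'o1 \<Rightarrow> 'o2" and FM :: "'m1 \<Rightarrow> 'm2"
  assumes FF: "F_linear_functor C D FO FM"
begin

lemma fob[simp]: "X \<in> Ob C \<Longrightarrow> FO X \<in> Ob D"
  using FF unfolding F_linear_functor_def by blast
lemma fhom0: "f \<in> Hom C X Y \<Longrightarrow> FM f \<in> Hom D (FO X) (FO Y)"
  using FF unfolding F_linear_functor_def by blast
lemma far[simp]: "C.ar f \<Longrightarrow> D.ar (FM f)" "C.ar f \<Longrightarrow> D.dm (FM f) = FO (C.dm f)"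
   "C.ar f \<Longrightarrow> D.cd (FM f) = FO (C.cd f)"
  using fhom0[OF C.ar_hom] D.hom_iff by blast+
lemma fid[simp]: "X \<in> Ob C \<Longrightarrow> FM (idt C X) = idt D (FO X)"
  using FF unfolding F_linear_functor_def by blast
lemma fcmp[simp]: "C.ar f \<Longrightarrow> C.ar g \<Longrightarrow> C.cd f = C.dm g \<Longrightarrow> FM (cmp C g f) = cmp D (FM g) (FM f)"
proof -
  assume h: "C.ar f" "C.ar g" "C.cd f = C.dm g"
  have "f \<in> Hom C (C.dm f) (C.dm g)" "g \<in> Hom C (C.dm g) (C.cd g)" using C.ar_hom[OF h(1)] C.ar_hom[OF h(2)] h by simp_all
  then show ?thesis using FF unfolding F_linear_functor_def by blast
qed
lemma fpls[simp]: "C.ar f \<Longrightarrow> C.ar g \<Longrightarrow> C.dm f = C.dm g \<Longrightarrow> C.cd f = C.cd g \<Longrightarrow> FM (pls C f g) = pls D (FM f) (FM g)"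
proof -
  assume h: "C.ar f" "C.ar g" "C.dm f = C.dm g" "C.cd f = C.cd g"
  have "f \<in> Hom C (C.dm f) (C.cd f)" "g \<in> Hom C (C.dm f) (C.cd f)" using C.ar_hom[OF h(1)] C.ar_hom[OF h(2)] h by simp_all
  then show ?thesis using FF unfolding F_linear_functor_def by blast
qed
lemma fsmul[simp]: "C.ar f \<Longrightarrow> FM (smul C a f) = smul D a (FM f)"
proof -
  assume h: "C.ar f"
  have "f \<in> Hom C (C.dm f) (C.cd f)" using h C.ar_hom by auto
  then show ?thesis using FF unfolding F_linear_functor_def by blast
qed
lemma fmdiff[simp]: "C.ar f \<Longrightarrow> C.ar g \<Longrightarrow> C.dm f = C.dm g \<Longrightarrow> C.cd f = C.cd g \<Longrightarrow> FM (mdiff C f g) = mdiff D (FM f) (FM g)"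
  unfolding mdiff_def by simp
lemma fzro[simp]: assumes "X \<in> Ob C" "Y \<in> Ob C" shows "FM (zro C X Y) = zro D (FO X) (FO Y)"
proof -
  let ?z = "zro C X Y"
  have e: "pls C ?z (smul C (-1) ?z) = ?z" using assms by simp
  have "FM ?z = FM (pls C ?z (smul C (-1) ?z))" by (simp only: e)
  also have "\<dots> = pls D (FM ?z) (FM (smul C (-1) ?z))" by (rule fpls) (use assms in simp_all)
  also have "\<dots> = pls D (FM ?z) (smul D (-1) (FM ?z))" by (subst fsmul) (use assms in simp_all)
  also have "\<dots> = zro D (FO X) (FO Y)" using assms by simp
  finally show ?thesis .
qed

lemma fcmp_eq: "C.ar f \<Longrightarrow> C.ar g \<Longrightarrow> C.cd f = C.dm g \<Longrightarrow> cmp C g f = h \<Longrightarrow> cmp D (FM g) (FM f) = FM h"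
  using fcmp by metis

lemma fiso: assumes "iso C X Y f" shows "iso D (FO X) (FO Y) (FM f)"
proof -
  obtain g where h: "C.ar f" "C.dm f = X" "C.cd f = Y" "C.ar g" "C.dm g = Y" "C.cd g = X"
    "cmp C g f = idt C X" "cmp C f g = idt C Y" using C.isoE[OF assms] by blast
  have o: "X \<in> Ob C" "Y \<in> Ob C" using h C.ar_ob by auto
  have e: "cmp D (FM g) (FM f) = idt D (FO X)" "cmp D (FM f) (FM g) = idt D (FO Y)"
    using fcmp_eq[OF h(1) h(4) _ h(7)] fcmp_eq[OF h(4) h(1) _ h(8)] h o by simp_all
  show ?thesis by (rule D.isoI[where g="FM g"]) (use h e in simp_all)
qed

lemma fisomorphic: "isomorphic C X Y \<Longrightarrow> isomorphic D (FO X) (FO Y)"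
  unfolding isomorphic_def using fiso by blast

lemma fbiprod: assumes "biprod C X X' Y i p i' p'"
  shows "biprod D (FO X) (FO X') (FO Y) (FM i) (FM p) (FM i') (FM p')"
proof -
  have bb: "C.ar i" "C.dm i = X" "C.cd i = Y" "C.ar p" "C.dm p = Y" "C.cd p = X"
     "C.ar i'" "C.dm i' = X'" "C.cd i' = Y" "C.ar p'" "C.dm p' = Y" "C.cd p' = X'"
     "cmp C p i = idt C X" "cmp C p' i' = idt C X'" "cmp C p i' = zro C X' X" "cmp C p' i = zro C X X'"
     "pls C (cmp C i p) (cmp C i' p') = idt C Y"
    by (insert assms[unfolded biprod_def C.hom_iff], elim conjE, assumption)+
  have o: "X \<in> Ob C" "Y \<in> Ob C" "X' \<in> Ob C" using bb C.ar_ob by metis+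
  have e: "cmp D (FM p) (FM i) = idt D (FO X)" "cmp D (FM p') (FM i') = idt D (FO X')"
    "cmp D (FM p) (FM i') = zro D (FO X') (FO X)" "cmp D (FM p') (FM i) = zro D (FO X) (FO X')"
    using fcmp_eq[OF bb(1) bb(4) _ bb(13)] fcmp_eq[OF bb(7) bb(10) _ bb(14)]
      fcmp_eq[OF bb(7) bb(4) _ bb(15)] fcmp_eq[OF bb(1) bb(10) _ bb(16)] bb o by simp_all
  have "FM (pls C (cmp C i p) (cmp C i' p')) = pls D (FM (cmp C i p)) (FM (cmp C i' p'))"
    by (rule fpls) (use bb in simp_all)
  then have e5: "pls D (cmp D (FM i) (FM p)) (cmp D (FM i') (FM p')) = idt D (FO Y)"
    using bb o by (simp add: bb(17))
  show ?thesis unfolding biprod_def D.hom_iff using e e5 bb o by simp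
qed

lemma fsummand: "is_direct_summand C X Y \<Longrightarrow> is_direct_summand D (FO X) (FO Y)"
  unfolding is_direct_summand_def using fbiprod fob by blast

end


locale tr =
  fixes C :: "('o,'m,'f::comm_ring_1,'x) tcat_scheme"
  assumes T: "triangulated C"

sublocale tr \<subseteq> lc C
  using T unfolding triangulated_def by unfold_locales blast

sublocale tr \<subseteq> S: lfun C C "shO C" "shM C"
  using T unfolding triangulated_def by unfold_locales blast

context tr begin

lemma TT: "(\<forall>X\<in>Ob C. \<forall>Y\<in>Ob C. bij_betw (shM C) (Hom C X Y) (Hom C (shO C X) (shO C Y))) \<and>
     (\<forall>Y\<in>Ob C. \<exists>X\<in>Ob C. isomorphic C (shO C X) Y) \<and>
     (\<forall>(X,Y,Z,f,g,h)\<in>tri C. triangle C X Y Z f g h) \<and>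
     (\<forall>X Y Z f g h X' Y' Z' f' g' h' a b c. (X,Y,Z,f,g,h) \<in> tri C \<longrightarrow>
        triangle C X' Y' Z' f' g' h' \<longrightarrow> iso C X X' a \<longrightarrow> iso C Y Y' b \<longrightarrow> iso C Z Z' c \<longrightarrow>
        cmp C f' a = cmp C b f \<longrightarrow> cmp C g' b = cmp C c g \<longrightarrow>
        cmp C h' c = cmp C (shM C a) h \<longrightarrow> (X',Y',Z',f',g',h') \<in> tri C) \<and>
     (\<forall>X\<in>Ob C. \<exists>Z0\<in>Ob C. (\<forall>W\<in>Ob C. Hom C Z0 W = {zro C Z0 W} \<and> Hom C W Z0 = {zro C W Z0}) \<and>
        (X, X, Z0, idt C X, zro C X Z0, zro C Z0 (shO C X)) \<in> tri C) \<and>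
     (\<forall>X Y f. f \<in> Hom C X Y \<longrightarrow> (\<exists>Z g h. (X,Y,Z,f,g,h) \<in> tri C)) \<and>
     (\<forall>X Y Z f g h. triangle C X Y Z f g h \<longrightarrow>
        ((X,Y,Z,f,g,h) \<in> tri C \<longleftrightarrow> (Y, Z, shO C X, g, h, smul C (-1) (shM C f)) \<in> tri C)) \<and>
     (\<forall>X Y Z f g h X' Y' Z' f' g' h' a b. (X,Y,Z,f,g,h) \<in> tri C \<longrightarrow>
        (X',Y',Z',f',g',h') \<in> tri C \<longrightarrow> a \<in> Hom C X X' \<longrightarrow> b \<in> Hom C Y Y' \<longrightarrow>
        cmp C b f = cmp C f' a \<longrightarrow>
        (\<exists>c\<in>Hom C Z Z'. cmp C c g = cmp C g' b \<and> cmp C (shM C a) h = cmp C h' c))"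
  using T unfolding triangulated_def by (elim conjE) (intro conjI; assumption)

lemma sh_bij: "X \<in> Ob C \<Longrightarrow> Y \<in> Ob C \<Longrightarrow> bij_betw (shM C) (Hom C X Y) (Hom C (shO C X) (shO C Y))"
  using TT[THEN conjunct1] by blast
lemma sh_ess: "Y \<in> Ob C \<Longrightarrow> \<exists>X\<in>Ob C. isomorphic C (shO C X) Y"
  using TT[THEN conjunct2, THEN conjunct1] by blast
lemma tri_tri: "(X,Y,Z,f,g,h) \<in> tri C \<Longrightarrow> triangle C X Y Z f g h"
  using TT[THEN conjunct2, THEN conjunct2, THEN conjunct1] by blast
lemma TR1: "(X,Y,Z,f,g,h) \<in> tri C \<Longrightarrow>
        triangle C X' Y' Z' f' g' h' \<Longrightarrow> iso C X X' a \<Longrightarrow> iso C Y Y' b \<Longrightarrow> iso C Z Z' c \<Longrightarrow>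
        cmp C f' a = cmp C b f \<Longrightarrow> cmp C g' b = cmp C c g \<Longrightarrow>
        cmp C h' c = cmp C (shM C a) h \<Longrightarrow> (X',Y',Z',f',g',h') \<in> tri C"
  using TT[THEN conjunct2, THEN conjunct2, THEN conjunct2, THEN conjunct1] by blast
lemma ztri: "X \<in> Ob C \<Longrightarrow> \<exists>Z0. zobj Z0 \<and> (X, X, Z0, idt C X, zro C X Z0, zro C Z0 (shO C X)) \<in> tri C"
  using TT[THEN conjunct2, THEN conjunct2, THEN conjunct2, THEN conjunct2, THEN conjunct1]
  unfolding zobj_def by blast
lemma cone: "f \<in> Hom C X Y \<Longrightarrow> \<exists>Z g h. (X,Y,Z,f,g,h) \<in> tri C"
  using TT[THEN conjunct2, THEN conjunct2, THEN conjunct2, THEN conjunct2, THEN conjunct2, THEN conjunct1] by blast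
lemma rot: "triangle C X Y Z f g h \<Longrightarrow>
        ((X,Y,Z,f,g,h) \<in> tri C \<longleftrightarrow> (Y, Z, shO C X, g, h, smul C (-1) (shM C f)) \<in> tri C)"
  using TT[THEN conjunct2, THEN conjunct2, THEN conjunct2, THEN conjunct2, THEN conjunct2, THEN conjunct2, THEN conjunct1] by blast
lemma TR3: "(X,Y,Z,f,g,h) \<in> tri C \<Longrightarrow>
        (X',Y',Z',f',g',h') \<in> tri C \<Longrightarrow> a \<in> Hom C X X' \<Longrightarrow> b \<in> Hom C Y Y' \<Longrightarrow>
        cmp C b f = cmp C f' a \<Longrightarrow>
        (\<exists>c\<in>Hom C Z Z'. cmp C c g = cmp C g' b \<and> cmp C (shM C a) h = cmp C h' c)"
  using TT[THEN conjunct2, THEN conjunct2, THEN conjunct2, THEN conjunct2, THEN conjunct2, THEN conjunct2, THEN conjunct2] by blast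

lemma triD: assumes "(X,Y,Z,f,g,h) \<in> tri C"
  shows "X \<in> Ob C" "Y \<in> Ob C" "Z \<in> Ob C" "ar f" "dm f = X" "cd f = Y" "ar g" "dm g = Y" "cd g = Z"
    "ar h" "dm h = Z" "cd h = shO C X"
  using tri_tri[OF assms] unfolding triangle_def hom_iff by blast+

lemma rot1: "(X,Y,Z,f,g,h) \<in> tri C \<Longrightarrow> (Y, Z, shO C X, g, h, smul C (-1) (shM C f)) \<in> tri C"
  using rot tri_tri by blast

lemma sh_inj: "ar f \<Longrightarrow> ar g \<Longrightarrow> dm f = dm g \<Longrightarrow> cd f = cd g \<Longrightarrow> shM C f = shM C g \<Longrightarrow> f = g"
proof -
  assume h: "ar f" "ar g" "dm f = dm g" "cd f = cd g" "shM C f = shM C g"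
  have i: "inj_on (shM C) (Hom C (dm f) (cd f))" using sh_bij[of "dm f" "cd f"] h(1) unfolding bij_betw_def by simp
  have m: "f \<in> Hom C (dm f) (cd f)" "g \<in> Hom C (dm f) (cd f)" using h by (simp_all add: hom_iff)
  show "f = g" by (rule inj_onD[OF i h(5) m])
qed

lemma sh_full: "X \<in> Ob C \<Longrightarrow> Y \<in> Ob C \<Longrightarrow> ar g \<Longrightarrow> dm g = shO C X \<Longrightarrow> cd g = shO C Y \<Longrightarrow>
   \<exists>f. ar f \<and> dm f = X \<and> cd f = Y \<and> shM C f = g"
proof -
  assume h: "X \<in> Ob C" "Y \<in> Ob C" "ar g" "dm g = shO C X" "cd g = shO C Y"
  have "g \<in> shM C ` Hom C X Y" using sh_bij[OF h(1,2)] h(3-5) unfolding bij_betw_def by (simp add: hom_iff)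
  then obtain f where "f \<in> Hom C X Y" "g = shM C f" by blast
  then show ?thesis by (auto simp: hom_iff)
qed

lemma sh_refl_iso: assumes "X \<in> Ob C" "Y \<in> Ob C" "isomorphic C (shO C X) (shO C Y)"
  shows "isomorphic C X Y"
proof -
  obtain al where "iso C (shO C X) (shO C Y) al" using assms(3) unfolding isomorphic_def by blast
  then obtain be where h: "ar al" "dm al = shO C X" "cd al = shO C Y" "ar be" "dm be = shO C Y" "cd be = shO C X"
    "cmp C be al = idt C (shO C X)" "cmp C al be = idt C (shO C Y)" using isoE by blast
  obtain a where a: "ar a" "dm a = X" "cd a = Y" "shM C a = al" using sh_full[OF assms(1,2) h(1-3)] by blast
  obtain b where b: "ar b" "dm b = Y" "cd b = X" "shM C b = be" using sh_full[OF assms(2,1) h(4-6)] by blast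
  have q1: "shM C (cmp C b a) = shM C (idt C X)" using a b h assms by simp
  have e1: "cmp C b a = idt C X" by (rule sh_inj[OF _ _ _ _ q1]) (use a b assms in simp_all)
  have q2: "shM C (cmp C a b) = shM C (idt C Y)" using a b h assms by simp
  have e2: "cmp C a b = idt C Y" by (rule sh_inj[OF _ _ _ _ q2]) (use a b assms in simp_all)
  have "iso C X Y a" by (rule isoI[where g=b]) (use a b e1 e2 in simp_all)
  then show ?thesis unfolding isomorphic_def by blast
qed

abbreviation shk where "shk k \<equiv> shO C ^^ k"
abbreviation shmk where "shmk k \<equiv> shM C ^^ k"

lemma shk_ob[simp]: "X \<in> Ob C \<Longrightarrow> shk k X \<in> Ob C"
  by (induction k) auto

lemma shk_bij: "X \<in> Ob C \<Longrightarrow> Y \<in> Ob C \<Longrightarrow> bij_betw (shmk k) (Hom C X Y) (Hom C (shk k X) (shk k Y))"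
proof (induction k)
  case 0 then show ?case by (simp add: bij_betw_def)
next
  case (Suc k)
  have "bij_betw (shM C \<circ> shmk k) (Hom C X Y) (Hom C (shO C (shk k X)) (shO C (shk k Y)))"
    by (rule bij_betw_trans[OF Suc.IH[OF Suc.prems]]) (rule sh_bij; simp add: Suc.prems)
  then show ?case by (simp add: comp_def)
qed

lemma shk_far[simp]: "ar f \<Longrightarrow> ar (shmk k f)" "ar f \<Longrightarrow> dm (shmk k f) = shk k (dm f)"
   "ar f \<Longrightarrow> cd (shmk k f) = shk k (cd f)"
  by (induction k) auto

lemma shk_zro[simp]: "X \<in> Ob C \<Longrightarrow> Y \<in> Ob C \<Longrightarrow> shmk k (zro C X Y) = zro C (shk k X) (shk k Y)"
  by (induction k) auto

lemma shk_inj: "ar f \<Longrightarrow> ar g \<Longrightarrow> dm f = dm g \<Longrightarrow> cd f = cd g \<Longrightarrow> shmk k f = shmk k g \<Longrightarrow> f = g"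
proof -
  assume h: "ar f" "ar g" "dm f = dm g" "cd f = cd g" "shmk k f = shmk k g"
  have i: "inj_on (shmk k) (Hom C (dm f) (cd f))" using shk_bij[of "dm f" "cd f" k] h(1) unfolding bij_betw_def by simp
  have m: "f \<in> Hom C (dm f) (cd f)" "g \<in> Hom C (dm f) (cd f)" using h by (simp_all add: hom_iff)
  show "f = g" by (rule inj_onD[OF i h(5) m])
qed

lemma shk_iso: "isomorphic C X Y \<Longrightarrow> isomorphic C (shk k X) (shk k Y)"
  by (induction k) (auto intro: S.fisomorphic)

lemma shk_refl_iso: "X \<in> Ob C \<Longrightarrow> Y \<in> Ob C \<Longrightarrow> isomorphic C (shk k X) (shk k Y) \<Longrightarrow> isomorphic C X Y"
proof (induction k)
  case 0 then show ?case by simp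
next
  case (Suc k)
  have "isomorphic C (shk k X) (shk k Y)" by (rule sh_refl_iso) (use Suc.prems in simp_all)
  then show ?case using Suc.IH Suc.prems by blast
qed

lemma shk_summand: "is_direct_summand C X Y \<Longrightarrow> is_direct_summand C (shk k X) (shk k Y)"
  by (induction k) (auto intro: S.fsummand)

end


context tr begin

lemma zobj_sh_id: "zobj Z \<Longrightarrow> idt C (shO C Z) = zro C (shO C Z) (shO C Z)"
proof -
  assume z: "zobj Z"
  have o: "Z \<in> Ob C" using z zobj_ob by blast
  have "idt C (shO C Z) = shM C (idt C Z)" using o by simp
  also have "\<dots> = shM C (zro C Z Z)" using zobj_id[OF z] by simp
  also have "\<dots> = zro C (shO C Z) (shO C Z)" using o by simp
  finally show ?thesis .
qed

lemma ztri2: assumes X: "X \<in> Ob C"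
  shows "\<exists>Z0. zobj Z0 \<and> (Z0, X, X, zro C Z0 X, idt C X, zro C X (shO C Z0)) \<in> tri C"
proof -
  obtain Z0 where z: "zobj Z0" and t: "(X, X, Z0, idt C X, zro C X Z0, zro C Z0 (shO C X)) \<in> tri C"
    using ztri[OF X] by blast
  have o: "Z0 \<in> Ob C" "shO C Z0 \<in> Ob C" using z zobj_ob by auto
  have ic: "iso C Z0 (shO C Z0) (zro C Z0 (shO C Z0))"
    by (rule isoI[where g="zro C (shO C Z0) Z0"]) (use o X z zobj_id zobj_sh_id in auto)
  have t2: "(X, X, shO C Z0, idt C X, zro C X (shO C Z0), zro C (shO C Z0) (shO C X)) \<in> tri C"
    by (rule TR1[OF t _ iso_id[OF X] iso_id[OF X] ic]) (use o X in \<open>simp_all add: triangle_def hom_iff\<close>)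
  have tr: "triangle C Z0 X X (zro C Z0 X) (idt C X) (zro C X (shO C Z0))"
    using o X by (simp add: triangle_def hom_iff)
  have "(Z0, X, X, zro C Z0 X, idt C X, zro C X (shO C Z0)) \<in> tri C"
    using rot[OF tr] t2 o X by simp
  then show ?thesis using z by blast
qed

lemma T0: assumes t: "(X,Y,Z,f,g,h) \<in> tri C" shows "cmp C g f = zro C X Z"
proof -
  note d = triD[OF t]
  obtain Z0 where z: "zobj Z0" and t0: "(X, X, Z0, idt C X, zro C X Z0, zro C Z0 (shO C X)) \<in> tri C"
    using ztri[OF d(1)] by blast
  have o: "Z0 \<in> Ob C" using z zobj_ob by auto
  have ha: "idt C X \<in> Hom C X X" and hb: "f \<in> Hom C X Y" using d by (simp_all add: hom_iff)
  have eq: "cmp C f (idt C X) = cmp C f (idt C X)" by simp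
  obtain c where c: "c \<in> Hom C Z0 Z" "cmp C c (zro C X Z0) = cmp C g f"
    using TR3[OF t0 t ha hb eq] d by auto
  then show ?thesis using d o by (simp add: hom_iff)
qed

lemma coex: assumes t: "(X,Y,Z,f,g,h) \<in> tri C" and u: "ar u" "dm u = Y" "cmp C u f = zro C X (cd u)"
  shows "\<exists>v. ar v \<and> dm v = Z \<and> cd v = cd u \<and> cmp C v g = u"
proof -
  note d = triD[OF t]
  have W: "cd u \<in> Ob C" using u by simp
  obtain Z0 where z: "zobj Z0" and t0: "(Z0, cd u, cd u, zro C Z0 (cd u), idt C (cd u), zro C (cd u) (shO C Z0)) \<in> tri C"
    using ztri2[OF W] by blast
  have o: "Z0 \<in> Ob C" using z zobj_ob by auto
  have ha: "zro C X Z0 \<in> Hom C X Z0" and hb: "u \<in> Hom C Y (cd u)" using d o u by (simp_all add: hom_iff)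
  have eq: "cmp C u f = cmp C (zro C Z0 (cd u)) (zro C X Z0)" using u d o by simp
  obtain c where c: "c \<in> Hom C Z (cd u)" "cmp C c g = cmp C (idt C (cd u)) u"
    using TR3[OF t t0 ha hb eq] by blast
  then show ?thesis using u by (auto simp: hom_iff)
qed

lemma ex: assumes t: "(X,Y,Z,f,g,h) \<in> tri C" and u: "ar u" "cd u = Y" "cmp C g u = zro C (dm u) Z"
  shows "\<exists>v. ar v \<and> dm v = dm u \<and> cd v = X \<and> cmp C f v = u"
proof -
  note d = triD[OF t]
  let ?W = "dm u"
  have W: "?W \<in> Ob C" using u by simp
  obtain Z0 where z: "zobj Z0" and t0: "(?W, ?W, Z0, idt C ?W, zro C ?W Z0, zro C Z0 (shO C ?W)) \<in> tri C"
    using ztri[OF W] by blast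
  have o: "Z0 \<in> Ob C" using z zobj_ob by auto
  have t0': "(?W, Z0, shO C ?W, zro C ?W Z0, zro C Z0 (shO C ?W), smul C (-1) (shM C (idt C ?W))) \<in> tri C"
    using rot1[OF t0] .
  have t': "(Y, Z, shO C X, g, h, smul C (-1) (shM C f)) \<in> tri C" using rot1[OF t] .
  have ha: "u \<in> Hom C ?W Y" and hb: "zro C Z0 Z \<in> Hom C Z0 Z" using d o u by (simp_all add: hom_iff)
  have eq: "cmp C (zro C Z0 Z) (zro C ?W Z0) = cmp C g u" using u d o by simp
  obtain c where c: "c \<in> Hom C (shO C ?W) (shO C X)"
    "cmp C (shM C u) (smul C (-1) (shM C (idt C ?W))) = cmp C (smul C (-1) (shM C f)) c"
    using TR3[OF t0' t' ha hb eq] by blast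
  have cc: "ar c" "dm c = shO C ?W" "cd c = shO C X" using c(1) by (simp_all add: hom_iff)
  have "smul C (-1) (shM C u) = smul C (-1) (cmp C (shM C f) c)" using c(2) u d cc by simp
  then have "smul C (-1) (smul C (-1) (shM C u)) = smul C (-1) (smul C (-1) (cmp C (shM C f) c))" by simp
  then have e: "shM C u = cmp C (shM C f) c" using u d cc by simp
  obtain v where v: "ar v" "dm v = ?W" "cd v = X" "shM C v = c" using sh_full[OF W d(1) cc] by blast
  have "shM C u = shM C (cmp C f v)" using e v d by simp
  then have "u = cmp C f v" by (rule sh_inj[rotated 4]) (use u v d in simp_all)
  then show ?thesis using v by blast
qed

end


context tr begin

lemma retract_summand:
  assumes s: "ar s" "dm s = Z" "cd s = Z1" and p: "ar p" "dm p = Z1" "cd p = Z"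
    and ps: "cmp C p s = idt C Z"
  shows "is_direct_summand C Z Z1"
proof -
  have oZ: "Z \<in> Ob C" "Z1 \<in> Ob C" using s by auto
  have sh: "s \<in> Hom C Z Z1" using s by (simp add: hom_iff)
  obtain W t e where t: "(Z, Z1, W, s, t, e) \<in> tri C" using cone[OF sh] by blast
  note d = triD[OF t]
  have ts: "cmp C t s = zro C Z W" using T0[OF t] .
  have t': "(Z1, W, shO C Z, t, e, smul C (-1) (shM C s)) \<in> tri C" using rot1[OF t] .
  have "cmp C (smul C (-1) (shM C s)) e = zro C W (shO C Z1)" using T0[OF rot1[OF t']] .
  then have "smul C (-1) (cmp C (shM C s) e) = zro C W (shO C Z1)" using d s by simp
  then have "smul C (-1) (smul C (-1) (cmp C (shM C s) e)) = smul C (-1) (zro C W (shO C Z1))" by simp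
  then have se: "cmp C (shM C s) e = zro C W (shO C Z1)" using d s by simp
  have "e = cmp C (shM C (cmp C p s)) e" using ps d oZ by simp
  also have "\<dots> = cmp C (shM C p) (cmp C (shM C s) e)" using d s p by simp
  also have "\<dots> = zro C W (shO C Z)" using se d s p by simp
  finally have e0: "e = zro C W (shO C Z)" .
  have "cmp C e (idt C W) = zro C (dm (idt C W)) (shO C Z)" using e0 d by simp
  then obtain q where q: "ar q" "dm q = W" "cd q = Z1" "cmp C t q = idt C W"
    using ex[OF t', of "idt C W"] d by auto
  define q' where "q' = mdiff C q (cmp C s (cmp C p q))"
  have q': "ar q'" "dm q' = W" "cd q' = Z1" using q s p unfolding q'_def by simp_all
  have pq': "cmp C p q' = zro C W Z" unfolding q'_def
    using q s p by (simp add: cmp_mdiff_r_s inv2[OF ps])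
  have tq': "cmp C t q' = idt C W" unfolding q'_def
    using q s p d by (simp add: cmp_mdiff_r_s ts flip: assoc_s)
  define pi where "pi = mdiff C (idt C Z1) (pls C (cmp C s p) (cmp C q' t))"
  have pi: "ar pi" "dm pi = Z1" "cd pi = Z1" using q' s p d oZ unfolding pi_def by simp_all
  have pis: "cmp C pi s = zro C Z (cd pi)" unfolding pi_def
    using q' s p d oZ by (simp add: cmp_mdiff_l_s cmp_pls_l_s ts ps)
  obtain v where v: "ar v" "dm v = W" "cd v = Z1" "cmp C v t = pi"
    using coex[OF t pi(1) pi(2) pis] pi by auto
  have piq: "cmp C pi q' = zro C W Z1" unfolding pi_def
    using q' s p d oZ by (simp add: cmp_mdiff_l_s cmp_pls_l_s tq' pq')
  have "v = cmp C v (cmp C t q')" using tq' v by simp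
  also have "\<dots> = cmp C pi q'" using v q' d by (simp flip: v(4))
  also have "\<dots> = zro C W Z1" by (rule piq)
  finally have v0: "v = zro C W Z1" .
  have "pi = zro C Z1 Z1" using v0 v d by (simp flip: v(4))
  then have md: "mdiff C (idt C Z1) (pls C (cmp C s p) (cmp C q' t)) = zro C Z1 Z1" unfolding pi_def .
  have sum: "idt C Z1 = pls C (cmp C s p) (cmp C q' t)"
    by (rule mdiff_eq_s) (use md q' s p d oZ in simp_all)
  have "biprod C Z W Z1 s p q' t"
    unfolding biprod_def hom_iff using s p q' d ps ts pq' tq' sum by simp
  then show ?thesis unfolding is_direct_summand_def using oZ d by blast
qed

end


context lc begin
lemma biprod_compl_iso: assumes b: "biprod C X X' Y i p i' p'" and iso: "isomorphic C X0 X'"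
  shows "\<exists>i2 p2. biprod C X X0 Y i p i2 p2"
proof -
  obtain be where "iso C X0 X' be" using iso unfolding isomorphic_def by blast
  then obtain be' where a: "ar be" "dm be = X0" "cd be = X'" "ar be'" "dm be' = X'" "cd be' = X0"
    "cmp C be' be = idt C X0" "cmp C be be' = idt C X'" using isoE by blast
  have bb: "ar i" "dm i = X" "cd i = Y" "ar p" "dm p = Y" "cd p = X"
     "ar i'" "dm i' = X'" "cd i' = Y" "ar p'" "dm p' = Y" "cd p' = X'"
     "cmp C p i = idt C X" "cmp C p' i' = idt C X'" "cmp C p i' = zro C X' X" "cmp C p' i = zro C X X'"
     "pls C (cmp C i p) (cmp C i' p') = idt C Y"
    by (insert b[unfolded biprod_def hom_iff], elim conjE, assumption)+
  have o: "X \<in> Ob C" "X0 \<in> Ob C" "X' \<in> Ob C" using a bb ar_ob by metis+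
  have e1: "cmp C (cmp C be' p') (cmp C i' be) = idt C X0"
    using a bb by (simp add: inv2[OF bb(14)])
  have e2: "cmp C p (cmp C i' be) = zro C X0 X" using a bb o by (simp flip: assoc_s)
  have e3: "cmp C (cmp C be' p') i = zro C X X0" using a bb o by simp
  have e4: "cmp C (cmp C i' be) (cmp C be' p') = cmp C i' p'" using a bb by (simp add: inv2[OF a(8)])
  have "biprod C X X0 Y i p (cmp C i' be) (cmp C be' p')"
    unfolding biprod_def hom_iff using a bb e1 e2 e3 e4 by simp
  then show ?thesis by blast
qed

lemma biprod_swap: assumes b: "biprod C X X' Y i p i' p'" shows "biprod C X' X Y i' p' i p"
proof -
  have bb: "ar i" "dm i = X" "cd i = Y" "ar p" "dm p = Y" "cd p = X"
     "ar i'" "dm i' = X'" "cd i' = Y" "ar p'" "dm p' = Y" "cd p' = X'"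
     "cmp C p i = idt C X" "cmp C p' i' = idt C X'" "cmp C p i' = zro C X' X" "cmp C p' i = zro C X X'"
     "pls C (cmp C i p) (cmp C i' p') = idt C Y"
    by (insert b[unfolded biprod_def hom_iff], elim conjE, assumption)+
  have "pls C (cmp C i' p') (cmp C i p) = pls C (cmp C i p) (cmp C i' p')"
    by (rule pls_comm) (use bb in \<open>simp_all add: hom_iff\<close>)
  then show ?thesis unfolding biprod_def hom_iff using bb by simp
qed
end


context tr begin

lemma biprod_desh: assumes b: "biprod C (shO C U) (shO C U') (shO C Y) i p i' p'"
  and o: "U \<in> Ob C" "U' \<in> Ob C" "Y \<in> Ob C"
  shows "\<exists>i0 p0 i0' p0'. biprod C U U' Y i0 p0 i0' p0'"
proof -
  have bb: "ar i" "dm i = shO C U" "cd i = shO C Y" "ar p" "dm p = shO C Y" "cd p = shO C U"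
     "ar i'" "dm i' = shO C U'" "cd i' = shO C Y" "ar p'" "dm p' = shO C Y" "cd p' = shO C U'"
     "cmp C p i = idt C (shO C U)" "cmp C p' i' = idt C (shO C U')" "cmp C p i' = zro C (shO C U') (shO C U)"
     "cmp C p' i = zro C (shO C U) (shO C U')"
     "pls C (cmp C i p) (cmp C i' p') = idt C (shO C Y)"
    by (insert b[unfolded biprod_def hom_iff], elim conjE, assumption)+
  obtain i0 where i0: "ar i0" "dm i0 = U" "cd i0 = Y" "shM C i0 = i" using sh_full[OF o(1) o(3) bb(1-3)] by blast
  obtain p0 where p0: "ar p0" "dm p0 = Y" "cd p0 = U" "shM C p0 = p" using sh_full[OF o(3) o(1) bb(4-6)] by blast
  obtain i1 where i1: "ar i1" "dm i1 = U'" "cd i1 = Y" "shM C i1 = i'" using sh_full[OF o(2) o(3) bb(7-9)] by blast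
  obtain p1 where p1: "ar p1" "dm p1 = Y" "cd p1 = U'" "shM C p1 = p'" using sh_full[OF o(3) o(2) bb(10-12)] by blast
  have q1: "shM C (cmp C p0 i0) = shM C (idt C U)" using i0 p0 bb o by simp
  have e1: "cmp C p0 i0 = idt C U" by (rule sh_inj[OF _ _ _ _ q1]) (use i0 p0 o in simp_all)
  have q2: "shM C (cmp C p1 i1) = shM C (idt C U')" using i1 p1 bb o by simp
  have e2: "cmp C p1 i1 = idt C U'" by (rule sh_inj[OF _ _ _ _ q2]) (use i1 p1 o in simp_all)
  have q3: "shM C (cmp C p0 i1) = shM C (zro C U' U)" using i1 p0 bb o by simp
  have e3: "cmp C p0 i1 = zro C U' U" by (rule sh_inj[OF _ _ _ _ q3]) (use i1 p0 o in simp_all)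
  have q4: "shM C (cmp C p1 i0) = shM C (zro C U U')" using i0 p1 bb o by simp
  have e4: "cmp C p1 i0 = zro C U U'" by (rule sh_inj[OF _ _ _ _ q4]) (use i0 p1 o in simp_all)
  have "shM C (pls C (cmp C i0 p0) (cmp C i1 p1)) = pls C (shM C (cmp C i0 p0)) (shM C (cmp C i1 p1))"
    by (rule S.fpls) (use i0 p0 i1 p1 in simp_all)
  then have q5: "shM C (pls C (cmp C i0 p0) (cmp C i1 p1)) = shM C (idt C Y)" using i0 p0 i1 p1 bb o by simp
  have e5: "pls C (cmp C i0 p0) (cmp C i1 p1) = idt C Y" by (rule sh_inj[OF _ _ _ _ q5]) (use i0 p0 i1 p1 o in simp_all)
  have "biprod C U U' Y i0 p0 i1 p1" unfolding biprod_def hom_iff using i0 p0 i1 p1 e1 e2 e3 e4 e5 by simp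
  then show ?thesis by blast
qed

lemma summand_desusp: assumes "is_direct_summand C W (shO C Y)" "Y \<in> Ob C"
  shows "\<exists>W'. is_direct_summand C W' Y \<and> isomorphic C W (shO C W')"
proof -
  obtain W2 i p i' p' where W2: "W2 \<in> Ob C" and b: "biprod C W W2 (shO C Y) i p i' p'"
    using assms(1) unfolding is_direct_summand_def by blast
  have oW: "W \<in> Ob C" using b biprod_ob by blast
  obtain U where U: "U \<in> Ob C" "isomorphic C (shO C U) W" using sh_ess[OF oW] by blast
  obtain U' where U': "U' \<in> Ob C" "isomorphic C (shO C U') W2" using sh_ess[OF W2] by blast
  obtain i2 p2 where b2: "biprod C W (shO C U') (shO C Y) i p i2 p2" using biprod_compl_iso[OF b U'(2)] by blast
  obtain i3 p3 where b3: "biprod C (shO C U') (shO C U) (shO C Y) i2 p2 i3 p3"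
    using biprod_compl_iso[OF biprod_swap[OF b2] U(2)] by blast
  obtain i0 p0 i0' p0' where "biprod C U U' Y i0 p0 i0' p0'"
    using biprod_desh[OF biprod_swap[OF b3] U(1) U'(1) assms(2)] by blast
  then have "is_direct_summand C U Y" unfolding is_direct_summand_def using U U' assms(2) by blast
  then show ?thesis using U(2) isomorphic_sym by blast
qed

lemma summand_desusp_k: assumes "is_direct_summand C W (shk k Y)" "Y \<in> Ob C"
  shows "\<exists>W'. is_direct_summand C W' Y \<and> isomorphic C W (shk k W')"
  using assms(1)
proof (induction k arbitrary: W)
  case 0
  then have h: "is_direct_summand C W Y" by simp
  then have "W \<in> Ob C" unfolding is_direct_summand_def by blast
  then have "isomorphic C W (shk 0 W)" using isomorphic_refl by simp
  then show ?case using h by blast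
next
  case (Suc k)
  have "is_direct_summand C W (shO C (shk k Y))" using Suc.prems by simp
  then obtain W1 where W1: "is_direct_summand C W1 (shk k Y)" "isomorphic C W (shO C W1)"
    using summand_desusp[of W "shk k Y"] assms(2) by auto
  obtain W' where W': "is_direct_summand C W' Y" "isomorphic C W1 (shk k W')" using Suc.IH[OF W1(1)] by blast
  have "isomorphic C (shO C W1) (shO C (shk k W'))" using S.fisomorphic[OF W'(2)] .
  then have "isomorphic C W (shk (Suc k) W')" using W1(2) isomorphic_trans by simp
  then show ?case using W' by blast
qed

end


context tr begin

lemma sc_iff: "X \<in> shifted_class C S n \<longleftrightarrow> X \<in> Ob C \<and> (\<exists>Y\<in>S. \<exists>j k::nat. n = int k - int j \<and> isomorphic C (shk j X) (shk k Y))"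
  unfolding shifted_class_def by blast

lemma sc_ob: "X \<in> shifted_class C S n \<Longrightarrow> X \<in> Ob C"
  using sc_iff by blast

lemma shk_swap: "shk j (shO C X) = shO C (shk j X)"
  by (simp add: funpow_swap1)

lemma sc_shift: assumes "X \<in> shifted_class C S m" shows "shO C X \<in> shifted_class C S (m + 1)"
proof -
  obtain Y j k where h: "X \<in> Ob C" "Y \<in> S" "m = int k - int j" "isomorphic C (shk j X) (shk k Y)"
    using assms sc_iff by blast
  have "isomorphic C (shk j (shO C X)) (shk (Suc k) Y)"
    using S.fisomorphic[OF h(4)] by (simp add: shk_swap)
  moreover have "m + 1 = int (Suc k) - int j" using h(3) by simp
  moreover have "shO C X \<in> Ob C" using h(1) by simp
  ultimately show ?thesis unfolding sc_iff using h(2) by blast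
qed

lemma sc_base: assumes "S \<subseteq> Ob C" "Y \<in> S" shows "shk k Y \<in> shifted_class C S (int k)"
proof -
  have o: "shk k Y \<in> Ob C" using assms by auto
  have "isomorphic C (shk 0 (shk k Y)) (shk k Y)" using isomorphic_refl[OF o] by simp
  moreover have "int k = int k - int 0" by simp
  ultimately show ?thesis using o assms(2) unfolding sc_iff by blast
qed

lemma sc_summand: assumes SO: "S \<subseteq> Ob C" and cl: "\<forall>X Y. is_direct_summand C X Y \<longrightarrow> Y \<in> S \<longrightarrow> X \<in> S"
  and z: "is_direct_summand C Z Z1" and z1: "Z1 \<in> shifted_class C S n"
  shows "Z \<in> shifted_class C S n"
proof -
  obtain Y j k where h: "Z1 \<in> Ob C" "Y \<in> S" "n = int k - int j" "isomorphic C (shk j Z1) (shk k Y)"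
    using z1 sc_iff by blast
  have oZ: "Z \<in> Ob C" using z unfolding is_direct_summand_def by blast
  have "is_direct_summand C (shk j Z) (shk k Y)"
    by (rule summand_transport[OF shk_summand[OF z] isomorphic_refl h(4)]) (simp add: oZ)
  then obtain W' where W': "is_direct_summand C W' Y" "isomorphic C (shk j Z) (shk k W')"
    using summand_desusp_k h(2) SO by blast
  have "W' \<in> S" using cl W'(1) h(2) by blast
  then show ?thesis unfolding sc_iff using oZ h(3) W'(2) by blast
qed

lemma sc_norm: assumes SO: "S \<subseteq> Ob C" and x: "X \<in> shifted_class C S n" and n: "n = int b - int a"
  shows "\<exists>Y\<in>S. isomorphic C (shk a X) (shk b Y)"
proof -
  obtain Y j k where h: "X \<in> Ob C" "Y \<in> S" "n = int k - int j" "isomorphic C (shk j X) (shk k Y)"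
    using x sc_iff by blast
  have oY: "Y \<in> Ob C" using h(2) SO by blast
  show ?thesis
  proof (cases "b \<le> k")
    case True
    define d where "d = k - b"
    have d: "k = d + b" using True d_def by simp
    have jd: "j = d + a" using n h(3) d by linarith
    have "isomorphic C (shk d (shk a X)) (shk d (shk b Y))" using h(4) unfolding d jd by (simp add: funpow_add)
    then have "isomorphic C (shk a X) (shk b Y)" by (rule shk_refl_iso[rotated 2]) (simp_all add: h(1) oY)
    then show ?thesis using h(2) by blast
  next
    case False
    define d where "d = b - k"
    have d: "b = d + k" using False d_def by simp
    have ad: "a = d + j" using n h(3) d by linarith
    have "isomorphic C (shk d (shk j X)) (shk d (shk k Y))" using shk_iso[OF h(4)] .
    then have "isomorphic C (shk a X) (shk b Y)" unfolding ad d by (simp add: funpow_add)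
    then show ?thesis using h(2) by blast
  qed
qed

lemma zero_transport: assumes a: "iso C A A' al" and b: "iso C B B' be"
  and z: "\<forall>h. ar h \<and> dm h = A' \<and> cd h = B' \<longrightarrow> h = zro C A' B'"
  and g: "ar g" "dm g = A" "cd g = B"
  shows "g = zro C A B"
proof -
  obtain al' where a': "ar al" "dm al = A" "cd al = A'" "ar al'" "dm al' = A'" "cd al' = A"
    "cmp C al' al = idt C A" "cmp C al al' = idt C A'" using isoE[OF a] by blast
  obtain be' where b': "ar be" "dm be = B" "cd be = B'" "ar be'" "dm be' = B'" "cd be' = B"
    "cmp C be' be = idt C B" "cmp C be be' = idt C B'" using isoE[OF b] by blast
  have o: "A \<in> Ob C" "A' \<in> Ob C" "B \<in> Ob C" "B' \<in> Ob C"
    using ar_ob[OF a'(1)] ar_ob[OF b'(1)] a'(2,3) b'(2,3) by simp_all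
  have "cmp C be (cmp C g al') = zro C A' B'" using z a' b' g by simp
  then have "cmp C be' (cmp C be (cmp C g al')) = cmp C be' (zro C A' B')" by simp
  then have "cmp C g al' = zro C A' B" using a' b' g o by (simp add: inv2[OF b'(7)])
  then have "cmp C (cmp C g al') al = cmp C (zro C A' B) al" by simp
  then show ?thesis using a' b' g o by simp
qed

lemma zero_shk: assumes o: "P \<in> Ob C" "Q \<in> Ob C" and z: "Hom C P Q = {zro C P Q}"
  shows "\<forall>h. ar h \<and> dm h = shk b P \<and> cd h = shk b Q \<longrightarrow> h = zro C (shk b P) (shk b Q)"
proof (intro allI impI)
  fix h assume h: "ar h \<and> dm h = shk b P \<and> cd h = shk b Q"
  then have "h \<in> Hom C (shk b P) (shk b Q)" by (simp add: hom_iff)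
  then have "h \<in> shmk b ` Hom C P Q" using shk_bij[OF o, of b] unfolding bij_betw_def by simp
  then show "h = zro C (shk b P) (shk b Q)" using z o by simp
qed

end

locale ws = tr C for C :: "('o,'m,'f::comm_ring_1,'x) tcat_scheme" +
  fixes w :: "'o set \<times> 'o set"
  assumes WS: "weight_structure C w"
begin

lemma fst_ob: "fst w \<subseteq> Ob C" using WS unfolding weight_structure_def by blast
lemma snd_ob: "snd w \<subseteq> Ob C" using WS unfolding weight_structure_def by blast
lemma fst_cl: "\<forall>X Y. is_direct_summand C X Y \<longrightarrow> Y \<in> fst w \<longrightarrow> X \<in> fst w"
  using WS unfolding weight_structure_def by blast
lemma snd_cl: "\<forall>X Y. is_direct_summand C X Y \<longrightarrow> Y \<in> snd w \<longrightarrow> X \<in> snd w"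
  using WS unfolding weight_structure_def by blast
lemma orth0: "X \<in> fst w \<Longrightarrow> Y \<in> wge C w 1 \<Longrightarrow> Hom C X Y = {zro C X Y}"
  using WS unfolding weight_structure_def by blast
lemma decomp: "M \<in> Ob C \<Longrightarrow> \<exists>A B a b c. (A, M, B, a, b, c) \<in> tri C \<and> A \<in> wle C w n \<and> B \<in> wge C w (n + 1)"
  using WS unfolding weight_structure_def by blast

lemma orth: assumes X: "X \<in> wle C w m" and Y: "Y \<in> wge C w (m + 1)"
  and f: "ar f" "dm f = X" "cd f = Y"
  shows "f = zro C X Y"
proof -
  define a where "a = nat (- m)"
  define b where "b = nat m"
  have m: "m = int b - int a" unfolding a_def b_def by simp
  obtain P where P: "P \<in> fst w" "isomorphic C (shk a X) (shk b P)"
    using sc_norm[OF fst_ob X[unfolded wle_def] m] by blast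
  have m1: "m + 1 = int (Suc b) - int a" using m by simp
  obtain Q where Q: "Q \<in> snd w" "isomorphic C (shk a Y) (shk (Suc b) Q)"
    using sc_norm[OF snd_ob Y[unfolded wge_def] m1] by blast
  have oP: "P \<in> Ob C" using P fst_ob by blast
  have oQ: "Q \<in> Ob C" "shO C Q \<in> Ob C" using Q snd_ob by auto
  have "shk 1 Q \<in> shifted_class C (snd w) (int 1)" by (rule sc_base[OF snd_ob Q(1)])
  then have "shO C Q \<in> wge C w 1" unfolding wge_def by simp
  then have z0: "Hom C P (shO C Q) = {zro C P (shO C Q)}" using orth0 P(1) by blast
  have z: "\<forall>h. ar h \<and> dm h = shk b P \<and> cd h = shk b (shO C Q) \<longrightarrow> h = zro C (shk b P) (shk b (shO C Q))"
    using zero_shk[OF oP oQ(2) z0] .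
  obtain al where al: "iso C (shk a X) (shk b P) al" using P(2) unfolding isomorphic_def by blast
  have "isomorphic C (shk a Y) (shk b (shO C Q))" using Q(2) by (simp add: shk_swap)
  then obtain be where be: "iso C (shk a Y) (shk b (shO C Q)) be" unfolding isomorphic_def by blast
  have "shmk a f = zro C (shk a X) (shk a Y)"
    by (rule zero_transport[OF al be z]) (use f in simp_all)
  then have "shmk a f = shmk a (zro C X Y)" using f ar_ob[OF f(1)] by simp
  then show ?thesis by (rule shk_inj[rotated 4]) (use f ar_ob[OF f(1)] in simp_all)
qed

lemma le_char: assumes Z: "Z \<in> Ob C"
  and h: "\<And>T f. T \<in> wge C w (n + 1) \<Longrightarrow> ar f \<Longrightarrow> dm f = Z \<Longrightarrow> cd f = T \<Longrightarrow> f = zro C Z T"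
  shows "Z \<in> wle C w n"
proof -
  obtain A B a b c where t: "(A, Z, B, a, b, c) \<in> tri C" and A: "A \<in> wle C w n" and B: "B \<in> wge C w (n + 1)"
    using decomp[OF Z] by blast
  note d = triD[OF t]
  have b0: "b = zro C Z B" using h[OF B] d by simp
  have "cmp C b (idt C Z) = zro C (dm (idt C Z)) B" using b0 d by simp
  then obtain v where v: "ar v" "dm v = Z" "cd v = A" "cmp C a v = idt C Z"
    using ex[OF t, of "idt C Z"] d by auto
  have "is_direct_summand C Z A" by (rule retract_summand[OF v(1-3) d(4-6) v(4)])
  then show ?thesis using sc_summand[OF fst_ob fst_cl] A unfolding wle_def by blast
qed

lemma ge_char: assumes Z: "Z \<in> Ob C"
  and h: "\<And>T f. T \<in> wle C w (n - 1) \<Longrightarrow> ar f \<Longrightarrow> dm f = T \<Longrightarrow> cd f = Z \<Longrightarrow> f = zro C T Z"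
  shows "Z \<in> wge C w n"
proof -
  obtain A B a b c where t: "(A, Z, B, a, b, c) \<in> tri C" and A: "A \<in> wle C w (n - 1)" and B: "B \<in> wge C w (n - 1 + 1)"
    using decomp[OF Z] by blast
  note d = triD[OF t]
  have a0: "a = zro C A Z" using h[OF A] d by simp
  have "cmp C (idt C Z) a = zro C A (cd (idt C Z))" using a0 d by simp
  then obtain v where v: "ar v" "dm v = B" "cd v = Z" "cmp C v b = idt C Z"
    using coex[OF t, of "idt C Z"] d by auto
  have "is_direct_summand C Z B" by (rule retract_summand[OF d(7-9) v(1-3) v(4)])
  then show ?thesis using sc_summand[OF snd_ob snd_cl] B unfolding wge_def by simp
qed

end


context lc begin
lemma iso_mono: assumes "iso C X Y f" "ar g" "ar h" "cd g = X" "cd h = X" "dm g = dm h" "cmp C f g = cmp C f h"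
  shows "g = h"
proof -
  obtain f' where a: "ar f" "dm f = X" "cd f = Y" "ar f'" "dm f' = Y" "cd f' = X"
    "cmp C f' f = idt C X" "cmp C f f' = idt C Y" using isoE[OF assms(1)] by blast
  have "g = cmp C f' (cmp C f g)" using a assms(2-6) by (simp add: inv2[OF a(7)])
  also have "\<dots> = cmp C f' (cmp C f h)" using assms(7) by simp
  also have "\<dots> = h" using a assms(2-6) by (simp add: inv2[OF a(7)])
  finally show ?thesis .
qed
lemma iso_epi: assumes "iso C X Y f" "ar g" "ar h" "dm g = Y" "dm h = Y" "cd g = cd h" "cmp C g f = cmp C h f"
  shows "g = h"
proof -
  obtain f' where a: "ar f" "dm f = X" "cd f = Y" "ar f'" "dm f' = Y" "cd f' = X"
    "cmp C f' f = idt C X" "cmp C f f' = idt C Y" using isoE[OF assms(1)] by blast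
  have "g = cmp C (cmp C g f) f'" using a assms(2-6) by simp
  also have "\<dots> = cmp C (cmp C h f) f'" using assms(7) by simp
  also have "\<dots> = h" using a assms(2-6) by simp
  finally show ?thesis .
qed
end

locale efun = C1: tr C1 + C2: tr C2
  for C1 :: "('o1,'m1,'f::comm_ring_1,'x) tcat_scheme" and C2 :: "('o2,'m2,'f,'y) tcat_scheme" +
  fixes rO :: "'o1 \<Rightarrow> 'o2" and rM :: "'m1 \<Rightarrow> 'm2" and phi :: "'o1 \<Rightarrow> 'm2"
  assumes E: "exact_functor C1 C2 rO rM phi"

sublocale efun \<subseteq> R: lfun C1 C2 rO rM
  using E unfolding exact_functor_def by unfold_locales blast

context efun begin

lemma phi_iso: "X \<in> Ob C1 \<Longrightarrow> iso C2 (rO (shO C1 X)) (shO C2 (rO X)) (phi X)"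
  using E unfolding exact_functor_def by blast
lemma phi_nat: "C1.ar f \<Longrightarrow> cmp C2 (phi (C1.cd f)) (rM (shM C1 f)) = cmp C2 (shM C2 (rM f)) (phi (C1.dm f))"
  using E C1.ar_hom unfolding exact_functor_def by blast
lemma r_tri: "(X,Y,Z,f,g,h) \<in> tri C1 \<Longrightarrow> (rO X, rO Y, rO Z, rM f, rM g, cmp C2 (phi X) (rM h)) \<in> tri C2"
  using E unfolding exact_functor_def by blast

lemma r_shk_iso: "X \<in> Ob C1 \<Longrightarrow> isomorphic C2 (rO (C1.shk k X)) (C2.shk k (rO X))"
proof (induction k)
  case 0 then show ?case using C2.isomorphic_refl by simp
next
  case (Suc k)
  have "isomorphic C2 (rO (shO C1 (C1.shk k X))) (shO C2 (rO (C1.shk k X)))"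
    using phi_iso[of "C1.shk k X"] Suc.prems unfolding isomorphic_def by auto
  moreover have "isomorphic C2 (shO C2 (rO (C1.shk k X))) (shO C2 (C2.shk k (rO X)))"
    using C2.S.fisomorphic[OF Suc.IH[OF Suc.prems]] .
  ultimately show ?case using C2.isomorphic_trans by simp
qed

lemma r_sc: assumes SO: "S \<subseteq> Ob C1" and SS: "\<forall>Y\<in>S. rO Y \<in> S'" and x: "X \<in> shifted_class C1 S n"
  shows "rO X \<in> shifted_class C2 S' n"
proof -
  obtain Y j k where h: "X \<in> Ob C1" "Y \<in> S" "n = int k - int j" "isomorphic C1 (C1.shk j X) (C1.shk k Y)"
    using x C1.sc_iff by blast
  have oY: "Y \<in> Ob C1" using SO h(2) by blast
  have i1: "isomorphic C2 (C2.shk j (rO X)) (rO (C1.shk j X))" using C2.isomorphic_sym r_shk_iso h(1) by blast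
  have i2: "isomorphic C2 (rO (C1.shk j X)) (rO (C1.shk k Y))" using R.fisomorphic[OF h(4)] .
  have i3: "isomorphic C2 (rO (C1.shk k Y)) (C2.shk k (rO Y))" using r_shk_iso oY by blast
  have "isomorphic C2 (C2.shk j (rO X)) (C2.shk k (rO Y))" using i1 i2 i3 C2.isomorphic_trans by blast
  moreover have "rO X \<in> Ob C2" using h(1) by simp
  moreover have "rO Y \<in> S'" using SS h(2) by blast
  ultimately show ?thesis unfolding C2.sc_iff using h(3) by blast
qed

definition lift where "lift X Y \<longleftrightarrow> (\<forall>v. C2.ar v \<and> C2.dm v = rO X \<and> C2.cd v = rO Y \<longrightarrow>
   (\<exists>u. C1.ar u \<and> C1.dm u = X \<and> C1.cd u = Y \<and> rM u = v))"

lemma lift_iso: assumes ix: "isomorphic C1 X X'" and iy: "isomorphic C1 Y Y'" and l: "lift X' Y'"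
  shows "lift X Y"
  unfolding lift_def
proof (intro allI impI)
  fix v assume v: "C2.ar v \<and> C2.dm v = rO X \<and> C2.cd v = rO Y"
  obtain al where "iso C1 X X' al" using ix unfolding isomorphic_def by blast
  then obtain al' where a: "C1.ar al" "C1.dm al = X" "C1.cd al = X'" "C1.ar al'" "C1.dm al' = X'" "C1.cd al' = X"
    "cmp C1 al' al = idt C1 X" "cmp C1 al al' = idt C1 X'" using C1.isoE by blast
  obtain be where "iso C1 Y Y' be" using iy unfolding isomorphic_def by blast
  then obtain be' where b: "C1.ar be" "C1.dm be = Y" "C1.cd be = Y'" "C1.ar be'" "C1.dm be' = Y'" "C1.cd be' = Y"
    "cmp C1 be' be = idt C1 Y" "cmp C1 be be' = idt C1 Y'" using C1.isoE by blast
  have o: "X \<in> Ob C1" "Y \<in> Ob C1" "X' \<in> Ob C1" "Y' \<in> Ob C1"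
    using C1.ar_ob[OF a(1)] C1.ar_ob[OF b(1)] a(2,3) b(2,3) by simp_all
  let ?v' = "cmp C2 (rM be) (cmp C2 v (rM al'))"
  have "C2.ar ?v' \<and> C2.dm ?v' = rO X' \<and> C2.cd ?v' = rO Y'" using v a b by simp
  then obtain u' where u': "C1.ar u'" "C1.dm u' = X'" "C1.cd u' = Y'" "rM u' = ?v'"
    using l unfolding lift_def by blast
  let ?u = "cmp C1 be' (cmp C1 u' al)"
  have e1: "cmp C2 (rM be') (rM be) = idt C2 (rO Y)" using R.fcmp_eq[OF b(1) b(4) _ b(7)] b o by simp
  have e2: "cmp C2 (rM al') (rM al) = idt C2 (rO X)" using R.fcmp_eq[OF a(1) a(4) _ a(7)] a o by simp
  have "rM ?u = cmp C2 (rM be') (cmp C2 ?v' (rM al))" using u' a b by simp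
  also have "\<dots> = cmp C2 (cmp C2 (rM be') (rM be)) (cmp C2 v (cmp C2 (rM al') (rM al)))"
    using a b v by simp
  also have "\<dots> = v" using e1 e2 v by simp
  finally have "rM ?u = v" .
  moreover have "C1.ar ?u" "C1.dm ?u = X" "C1.cd ?u = Y" using u' a b by simp_all
  ultimately show "\<exists>u. C1.ar u \<and> C1.dm u = X \<and> C1.cd u = Y \<and> rM u = v" by blast
qed

lemma lift_sh: assumes o: "X \<in> Ob C1" "Y \<in> Ob C1" and l: "lift X Y"
  shows "lift (shO C1 X) (shO C1 Y)"
  unfolding lift_def
proof (intro allI impI)
  fix v assume v: "C2.ar v \<and> C2.dm v = rO (shO C1 X) \<and> C2.cd v = rO (shO C1 Y)"
  obtain px' where px: "C2.ar (phi X)" "C2.dm (phi X) = rO (shO C1 X)" "C2.cd (phi X) = shO C2 (rO X)"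
    "C2.ar px'" "C2.dm px' = shO C2 (rO X)" "C2.cd px' = rO (shO C1 X)"
    "cmp C2 px' (phi X) = idt C2 (rO (shO C1 X))" "cmp C2 (phi X) px' = idt C2 (shO C2 (rO X))"
    using C2.isoE[OF phi_iso[OF o(1)]] by blast
  have py: "C2.ar (phi Y)" "C2.dm (phi Y) = rO (shO C1 Y)" "C2.cd (phi Y) = shO C2 (rO Y)"
    using C2.isoE[OF phi_iso[OF o(2)]] by blast+
  let ?w' = "cmp C2 (phi Y) (cmp C2 v px')"
  have w': "C2.ar ?w'" "C2.dm ?w' = shO C2 (rO X)" "C2.cd ?w' = shO C2 (rO Y)" using v px py by simp_all
  obtain w where w: "C2.ar w" "C2.dm w = rO X" "C2.cd w = rO Y" "shM C2 w = ?w'"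
    using C2.sh_full[OF _ _ w'] o by auto
  obtain u where u: "C1.ar u" "C1.dm u = X" "C1.cd u = Y" "rM u = w" using l w unfolding lift_def by blast
  have "cmp C2 (phi Y) (rM (shM C1 u)) = cmp C2 (shM C2 (rM u)) (phi X)" using phi_nat[OF u(1)] u by simp
  also have "\<dots> = cmp C2 ?w' (phi X)" using u w by simp
  also have "\<dots> = cmp C2 (phi Y) v" using v px py by (simp add: C2.inv2[OF px(7)])
  finally have "cmp C2 (phi Y) (rM (shM C1 u)) = cmp C2 (phi Y) v" .
  then have "rM (shM C1 u) = v" by (rule C2.iso_mono[OF phi_iso[OF o(2)], rotated 5]) (use u v in simp_all)
  moreover have "C1.ar (shM C1 u)" "C1.dm (shM C1 u) = shO C1 X" "C1.cd (shM C1 u) = shO C1 Y" using u by simp_all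
  ultimately show "\<exists>u. C1.ar u \<and> C1.dm u = shO C1 X \<and> C1.cd u = shO C1 Y \<and> rM u = v" by blast
qed

lemma lift_desh: assumes o: "X \<in> Ob C1" "Y \<in> Ob C1" and l: "lift (shO C1 X) (shO C1 Y)"
  shows "lift X Y"
  unfolding lift_def
proof (intro allI impI)
  fix v assume v: "C2.ar v \<and> C2.dm v = rO X \<and> C2.cd v = rO Y"
  have px: "C2.ar (phi X)" "C2.dm (phi X) = rO (shO C1 X)" "C2.cd (phi X) = shO C2 (rO X)"
    using C2.isoE[OF phi_iso[OF o(1)]] by blast+
  obtain py' where py: "C2.ar (phi Y)" "C2.dm (phi Y) = rO (shO C1 Y)" "C2.cd (phi Y) = shO C2 (rO Y)"
    "C2.ar py'" "C2.dm py' = shO C2 (rO Y)" "C2.cd py' = rO (shO C1 Y)"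
    "cmp C2 py' (phi Y) = idt C2 (rO (shO C1 Y))" "cmp C2 (phi Y) py' = idt C2 (shO C2 (rO Y))"
    using C2.isoE[OF phi_iso[OF o(2)]] by blast
  let ?v' = "cmp C2 py' (cmp C2 (shM C2 v) (phi X))"
  have "C2.ar ?v' \<and> C2.dm ?v' = rO (shO C1 X) \<and> C2.cd ?v' = rO (shO C1 Y)" using v px py by simp
  then obtain u' where u': "C1.ar u'" "C1.dm u' = shO C1 X" "C1.cd u' = shO C1 Y" "rM u' = ?v'"
    using l unfolding lift_def by blast
  obtain u where u: "C1.ar u" "C1.dm u = X" "C1.cd u = Y" "shM C1 u = u'"
    using C1.sh_full[OF o u'(1-3)] by blast
  have "cmp C2 (shM C2 (rM u)) (phi X) = cmp C2 (phi Y) (rM (shM C1 u))" using phi_nat[OF u(1)] u by simp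
  also have "\<dots> = cmp C2 (phi Y) ?v'" using u u' by simp
  also have "\<dots> = cmp C2 (shM C2 v) (phi X)" using v px py by (simp add: C2.inv2[OF py(8)])
  finally have "cmp C2 (shM C2 (rM u)) (phi X) = cmp C2 (shM C2 v) (phi X)" .
  then have "shM C2 (rM u) = shM C2 v" by (rule C2.iso_epi[OF phi_iso[OF o(1)], rotated 5]) (use u v in simp_all)
  then have "rM u = v" by (rule C2.sh_inj[rotated 4]) (use u v in simp_all)
  then show "\<exists>u. C1.ar u \<and> C1.dm u = X \<and> C1.cd u = Y \<and> rM u = v" using u by blast
qed

lemma lift_shk: "X \<in> Ob C1 \<Longrightarrow> Y \<in> Ob C1 \<Longrightarrow> lift X Y \<Longrightarrow> lift (C1.shk k X) (C1.shk k Y)"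
  by (induction k) (simp_all add: lift_sh)

lemma lift_deshk: "X \<in> Ob C1 \<Longrightarrow> Y \<in> Ob C1 \<Longrightarrow> lift (C1.shk k X) (C1.shk k Y) \<Longrightarrow> lift X Y"
proof (induction k)
  case 0 then show ?case by simp
next
  case (Suc k)
  have "lift (C1.shk k X) (C1.shk k Y)" by (rule lift_desh) (use Suc.prems in simp_all)
  then show ?case using Suc by blast
qed

end


locale mainctx = efun C1 C2 rO rM phi + W1: ws C1 w1 + W2: ws C2 w2
  for C1 :: "('o1,'m1,'f::comm_ring_1,'x) tcat_scheme" and C2 :: "('o2,'m2,'f,'y) tcat_scheme"
  and rO rM phi w1 w2 +
  assumes WE: "weight_exact C1 w1 C2 w2 rO"
    and FH: "full_on_hearts C1 w1 C2 rO rM"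
begin

lemma rle: "X \<in> wle C1 w1 m \<Longrightarrow> rO X \<in> wle C2 w2 m"
  unfolding wle_def by (rule r_sc[OF W1.fst_ob]) (use WE in \<open>simp_all add: weight_exact_def\<close>)
lemma rge: "X \<in> wge C1 w1 m \<Longrightarrow> rO X \<in> wge C2 w2 m"
  unfolding wge_def by (rule r_sc[OF W1.snd_ob]) (use WE in \<open>simp_all add: weight_exact_def\<close>)

lemma heart_norm: assumes "X \<in> wle C1 w1 n" "X \<in> wge C1 w1 n"
  shows "\<exists>P\<in>heart w1. isomorphic C1 (C1.shk (nat (- n)) X) (C1.shk (nat n) P)"
proof -
  have m: "n = int (nat n) - int (nat (- n))" by simp
  obtain P where P: "P \<in> fst w1" "isomorphic C1 (C1.shk (nat (- n)) X) (C1.shk (nat n) P)"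
    using C1.sc_norm[OF W1.fst_ob assms(1)[unfolded wle_def] m] by blast
  obtain Q where Q: "Q \<in> snd w1" "isomorphic C1 (C1.shk (nat (- n)) X) (C1.shk (nat n) Q)"
    using C1.sc_norm[OF W1.snd_ob assms(2)[unfolded wge_def] m] by blast
  have o: "P \<in> Ob C1" "Q \<in> Ob C1" using P Q W1.fst_ob W1.snd_ob by auto
  have "isomorphic C1 (C1.shk (nat n) P) (C1.shk (nat n) Q)"
    using C1.isomorphic_trans[OF C1.isomorphic_sym[OF P(2)] Q(2)] .
  then have "isomorphic C1 P Q" by (rule C1.shk_refl_iso[rotated 2]) (use o in simp_all)
  then have "P \<in> snd w1" using C1.closed_iso[OF W1.snd_cl] Q(1) by blast
  then show ?thesis using P unfolding heart_def by blast
qed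

lemma lift_heart: assumes "P \<in> heart w1" "P' \<in> heart w1" shows "lift P P'"
  unfolding lift_def
proof (intro allI impI)
  fix v assume v: "C2.ar v \<and> C2.dm v = rO P \<and> C2.cd v = rO P'"
  then have "v \<in> Hom C2 (rO P) (rO P')" by (simp add: C2.hom_iff)
  then have "v \<in> rM ` Hom C1 P P'" using FH assms unfolding full_on_hearts_def by blast
  then obtain u where "u \<in> Hom C1 P P'" "rM u = v" by blast
  then show "\<exists>u. C1.ar u \<and> C1.dm u = P \<and> C1.cd u = P' \<and> rM u = v" by (auto simp: C1.hom_iff)
qed

lemma lift_n: assumes "X \<in> wle C1 w1 n" "X \<in> wge C1 w1 n" "Y \<in> wle C1 w1 n" "Y \<in> wge C1 w1 n"
  shows "lift X Y"
proof -
  obtain P where P: "P \<in> heart w1" "isomorphic C1 (C1.shk (nat (- n)) X) (C1.shk (nat n) P)"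
    using heart_norm[OF assms(1,2)] by blast
  obtain P' where P': "P' \<in> heart w1" "isomorphic C1 (C1.shk (nat (- n)) Y) (C1.shk (nat n) P')"
    using heart_norm[OF assms(3,4)] by blast
  have o: "P \<in> Ob C1" "P' \<in> Ob C1" using P(1) P'(1) W1.fst_ob unfolding heart_def by auto
  have oX: "X \<in> Ob C1" "Y \<in> Ob C1" using assms(1,3) C1.sc_ob unfolding wle_def by blast+
  have "lift (C1.shk (nat n) P) (C1.shk (nat n) P')" by (rule lift_shk[OF o lift_heart[OF P(1) P'(1)]])
  then have "lift (C1.shk (nat (- n)) X) (C1.shk (nat (- n)) Y)" using lift_iso P(2) P'(2) by blast
  then show ?thesis using lift_deshk oX by blast
qed

end


context mainctx begin

lemma X2_le: assumes t: "(X1, A1, X2, x1, x2, x3) \<in> tri C1" and X1: "X1 \<in> wle C1 w1 (n - 1)"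
  and A1: "A1 \<in> wle C1 w1 n"
  shows "X2 \<in> wle C1 w1 n"
proof -
  note d = C1.triD[OF t]
  have t': "(A1, X2, shO C1 X1, x2, x3, smul C1 (-1) (shM C1 x1)) \<in> tri C1" using C1.rot1[OF t] .
  have sX1: "shO C1 X1 \<in> wle C1 w1 n" using C1.sc_shift[OF X1[unfolded wle_def]] unfolding wle_def by simp
  show ?thesis
  proof (rule W1.le_char[OF d(3)])
    fix T f assume T: "T \<in> wge C1 w1 (n + 1)" and f: "C1.ar f" "C1.dm f = X2" "C1.cd f = T"
    have "cmp C1 f x2 = zro C1 A1 T" by (rule W1.orth[OF A1 T]) (use f d in simp_all)
    then have "cmp C1 f x2 = zro C1 A1 (C1.cd f)" using f by simp
    then obtain v where v: "C1.ar v" "C1.dm v = shO C1 X1" "C1.cd v = C1.cd f" "cmp C1 v x3 = f"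
      using C1.coex[OF t' f(1)] f by auto
    have "v = zro C1 (shO C1 X1) T" by (rule W1.orth[OF sX1 T]) (use v f in simp_all)
    moreover have "T \<in> Ob C1" using C1.ar_ob(2)[OF f(1)] f(3) by simp
    ultimately show "f = zro C1 X2 T" using v f d by (simp flip: v(4))
  qed
qed

lemma Y1_ge: assumes t: "(Y1, B, Y2, y1, y2, y3) \<in> tri C1" and Y2: "Y2 \<in> wge C1 w1 (n + 1)"
  and B: "B \<in> wge C1 w1 n"
  shows "Y1 \<in> wge C1 w1 n"
proof -
  note d = C1.triD[OF t]
  have t'': "(Y2, shO C1 Y1, shO C1 B, y3, smul C1 (-1) (shM C1 y1), smul C1 (-1) (shM C1 y2)) \<in> tri C1"
    using C1.rot1[OF C1.rot1[OF t]] .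
  show ?thesis
  proof (rule W1.ge_char[OF d(1)])
    fix T f assume T: "T \<in> wle C1 w1 (n - 1)" and f: "C1.ar f" "C1.dm f = T" "C1.cd f = Y1"
    have oT: "T \<in> Ob C1" using T C1.sc_ob unfolding wle_def by blast
    have B': "B \<in> wge C1 w1 (n - 1 + 1)" using B by simp
    have z: "cmp C1 y1 f = zro C1 T B" by (rule W1.orth[OF T B']) (use f d in simp_all)
    have "cmp C1 (smul C1 (-1) (shM C1 y1)) (shM C1 f) = smul C1 (-1) (shM C1 (cmp C1 y1 f))"
      using f d by simp
    also have "\<dots> = zro C1 (C1.dm (shM C1 f)) (shO C1 B)" using z f d oT by simp
    finally have e: "cmp C1 (smul C1 (-1) (shM C1 y1)) (shM C1 f) = zro C1 (C1.dm (shM C1 f)) (shO C1 B)" .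
    obtain v where v: "C1.ar v" "C1.dm v = shO C1 T" "C1.cd v = Y2" "cmp C1 y3 v = shM C1 f"
      using C1.ex[OF t'', of "shM C1 f"] e f by auto
    have sT: "shO C1 T \<in> wle C1 w1 n" using C1.sc_shift[OF T[unfolded wle_def]] unfolding wle_def by simp
    have "v = zro C1 (shO C1 T) Y2" by (rule W1.orth[OF sT Y2]) (use v in simp_all)
    then have "shM C1 f = shM C1 (zro C1 T Y1)" using v d f oT by (simp flip: v(4))
    then show "f = zro C1 T Y1" by (rule C1.sh_inj[rotated 4]) (use f d oT in simp_all)
  qed
qed

lemma main: assumes mw: "minimal_weight_filtration C1 w1 n A M B a b delta"
  shows "minimal_weight_filtration C2 w2 n (rO A) (rO M) (rO B) (rM a) (rM b) (cmp C2 (phi A) (rM delta))"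
proof -
  have t: "(A, M, B, a, b, delta) \<in> tri C1" and A: "A \<in> wle C1 w1 (n - 1)" and B: "B \<in> wge C1 w1 n"
    and rd: "rad C1 B (shO C1 A) delta" using mw unfolding minimal_weight_filtration_def by blast+
  note d = C1.triD[OF t]
  have rt: "(rO A, rO M, rO B, rM a, rM b, cmp C2 (phi A) (rM delta)) \<in> tri C2" using r_tri[OF t] .
  note rdd = C2.triD[OF rt]
  let ?A1 = "shO C1 A"
  let ?d' = "cmp C2 (phi A) (rM delta)"
  have A1: "?A1 \<in> wle C1 w1 n" using C1.sc_shift[OF A[unfolded wle_def]] unfolding wle_def by simp
  have oA1: "?A1 \<in> Ob C1" using d by simp
  obtain X1 X2 x1 x2 x3 where tX: "(X1, ?A1, X2, x1, x2, x3) \<in> tri C1" and X1: "X1 \<in> wle C1 w1 (n - 1)"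
    and X2: "X2 \<in> wge C1 w1 (n - 1 + 1)" using W1.decomp[OF oA1] by blast
  obtain Y1 Y2 y1 y2 y3 where tY: "(Y1, B, Y2, y1, y2, y3) \<in> tri C1" and Y1: "Y1 \<in> wle C1 w1 n"
    and Y2: "Y2 \<in> wge C1 w1 (n + 1)" using W1.decomp[OF d(3)] by blast
  note dX = C1.triD[OF tX]
  note dY = C1.triD[OF tY]
  have X2n: "X2 \<in> wge C1 w1 n" using X2 by simp
  have X2le: "X2 \<in> wle C1 w1 n" by (rule X2_le[OF tX X1 A1])
  have Y1ge: "Y1 \<in> wge C1 w1 n" by (rule Y1_ge[OF tY Y2 B])
  have lf: "lift X2 Y1" by (rule lift_n[OF X2le X2n Y1 Y1ge])
  have rtX: "(rO X1, rO ?A1, rO X2, rM x1, rM x2, cmp C2 (phi X1) (rM x3)) \<in> tri C2" using r_tri[OF tX] .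
  have rtY: "(rO Y1, rO B, rO Y2, rM y1, rM y2, cmp C2 (phi Y1) (rM y3)) \<in> tri C2" using r_tri[OF tY] .
  have phA: "C2.ar (phi A)" "C2.dm (phi A) = rO ?A1" "C2.cd (phi A) = shO C2 (rO A)"
    using C2.isoE[OF phi_iso[OF d(1)]] by blast+
  have rad2: "\<forall>g\<in>Hom C2 (shO C2 (rO A)) (rO B). iso C2 (rO B) (rO B) (mdiff C2 (idt C2 (rO B)) (cmp C2 g ?d'))"
  proof
    fix g assume g0: "g \<in> Hom C2 (shO C2 (rO A)) (rO B)"
    have g: "C2.ar g" "C2.dm g = shO C2 (rO A)" "C2.cd g = rO B" using g0 by (simp_all add: C2.hom_iff)
    let ?g' = "cmp C2 g (phi A)"
    have g': "C2.ar ?g'" "C2.dm ?g' = rO ?A1" "C2.cd ?g' = rO B" using g phA by simp_all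
    have "cmp C2 ?g' (rM x1) = zro C2 (rO X1) (rO B)"
      by (rule W2.orth[OF rle[OF X1]]) (use rge[OF B] g' dX in simp_all)
    then have "cmp C2 ?g' (rM x1) = zro C2 (rO X1) (C2.cd ?g')" using g' by simp
    then obtain uu where uu: "C2.ar uu" "C2.dm uu = rO X2" "C2.cd uu = rO B" "cmp C2 uu (rM x2) = ?g'"
      using C2.coex[OF rtX g'(1) g'(2)] g' by auto
    have Y2': "rO Y2 \<in> wge C2 w2 (n + 1)" using rge[OF Y2] .
    have "cmp C2 (rM y2) uu = zro C2 (rO X2) (rO Y2)"
      by (rule W2.orth[OF rle[OF X2le] Y2']) (use uu dY in simp_all)
    then have "cmp C2 (rM y2) uu = zro C2 (C2.dm uu) (rO Y2)" using uu by simp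
    then obtain vv where vv: "C2.ar vv" "C2.dm vv = rO X2" "C2.cd vv = rO Y1" "cmp C2 (rM y1) vv = uu"
      using C2.ex[OF rtY uu(1)] uu dY by auto
    obtain v1 where v1: "C1.ar v1" "C1.dm v1 = X2" "C1.cd v1 = Y1" "rM v1 = vv"
      using lf vv unfolding lift_def by blast
    let ?k = "cmp C1 y1 (cmp C1 v1 x2)"
    have k: "C1.ar ?k" "C1.dm ?k = ?A1" "C1.cd ?k = B" using v1 dX dY by simp_all
    have rk: "rM ?k = ?g'"
    proof -
      have "rM ?k = cmp C2 (rM y1) (cmp C2 vv (rM x2))" using v1 dX dY by simp
      also have "\<dots> = cmp C2 uu (rM x2)" using vv uu dX dY by (simp flip: vv(4))
      also have "\<dots> = ?g'" by (rule uu(4))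
      finally show ?thesis .
    qed
    have "cmp C2 g ?d' = cmp C2 ?g' (rM delta)" using g phA d by simp
    also have "\<dots> = cmp C2 (rM ?k) (rM delta)" using rk by simp
    also have "\<dots> = rM (cmp C1 ?k delta)" using k d by simp
    finally have gd: "cmp C2 g ?d' = rM (cmp C1 ?k delta)" .
    have "iso C1 B B (mdiff C1 (idt C1 B) (cmp C1 ?k delta))"
      using rd k unfolding rad_def by (auto simp: C1.hom_iff)
    then have "iso C2 (rO B) (rO B) (rM (mdiff C1 (idt C1 B) (cmp C1 ?k delta)))" by (rule R.fiso)
    moreover have "rM (mdiff C1 (idt C1 B) (cmp C1 ?k delta)) = mdiff C2 (idt C2 (rO B)) (cmp C2 g ?d')"
      using k d gd by simp
    ultimately show "iso C2 (rO B) (rO B) (mdiff C2 (idt C2 (rO B)) (cmp C2 g ?d'))" by simp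
  qed
  have "rad C2 (rO B) (shO C2 (rO A)) ?d'"
    unfolding rad_def using rad2 rdd by (simp add: C2.hom_iff)
  then show ?thesis unfolding minimal_weight_filtration_def using rt rle[OF A] rge[OF B] by blast
qed

end

theorem mainTheorem2:
  fixes C1 :: "('o1,'m1,'f::comm_ring_1) tcat"
    and C2 :: "('o2,'m2,'f) tcat"
    and w1 :: "'o1 set \<times> 'o1 set" and w2 :: "'o2 set \<times> 'o2 set"
    and rO :: "'o1 \<Rightarrow> 'o2" and rM :: "'m1 \<Rightarrow> 'm2" and phi :: "'o1 \<Rightarrow> 'm2"
  assumes "fin_prod_char0_fields TYPE('f)"
    and "triangulated C1" and "triangulated C2"
    and "weight_structure C1 w1" and "weight_structure C2 w2"
    and "exact_functor C1 C2 rO rM phi"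
    and "weight_exact C1 w1 C2 w2 rO"
    and "full_on_hearts C1 w1 C2 rO rM"
    and "minimal_weight_filtration C1 w1 n A M B a b delta"
  shows "minimal_weight_filtration C2 w2 n (rO A) (rO M) (rO B) (rM a) (rM b)
           (cmp C2 (phi A) (rM delta))"
proof -
  interpret mainctx C1 C2 rO rM phi w1 w2
    using assms by unfold_locales auto
  show ?thesis using main assms(9) by blast
qed

end
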